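(* Let $F$ be a forest and let $\ell(F)$ be the length (number of edges) of a longest path in $F$. Then $\chi_{\mathrm{g}}(F)=2$ if and only if either $1\le \ell(F)\le 2$, or $\ell(F)=3$, $|V(F)|$ is odd, and every component of $F$ with diameter $3$ is a path.
   Context: The $t$-coloring game on a finite graph $G$ with a set $C$ of $t$ colors: Alice and Bob alternate turns, Alice first, each coloring an uncolored vertex with a color from $C$ that is legal (not used on any neighbor of the vertex). Bob wins if at some point an uncolored vertex has no legal color available; otherwise Alice wins when all vertices are colored. The game chromatic number $\chi_{\mathrm{g}}(G)$ is the least $t$ such that Alice has a winning strategy in the $t$-coloring game on the initially uncolored graph $G$. *)

theory Defs
  imports Main
begin

definition simple_graph :: "'a set \<Rightarrow> ('a \<Rightarrow> 'a \<Rightarrow> bool) \<Rightarrow> bool" where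
  "simple_graph V E \<longleftrightarrow> finite V \<and> (\<forall>u v. E u v \<longrightarrow> E v u)
     \<and> (\<forall>v. \<not> E v v) \<and> (\<forall>u v. E u v \<longrightarrow> u \<in> V \<and> v \<in> V)"

definition is_path :: "'a set \<Rightarrow> ('a \<Rightarrow> 'a \<Rightarrow> bool) \<Rightarrow> 'a list \<Rightarrow> bool" where
  "is_path V E p \<longleftrightarrow> p \<noteq> [] \<and> distinct p \<and> set p \<subseteq> V
     \<and> (\<forall>i. Suc i < length p \<longrightarrow> E (p ! i) (p ! Suc i))"

definition is_cycle :: "'a set \<Rightarrow> ('a \<Rightarrow> 'a \<Rightarrow> bool) \<Rightarrow> 'a list \<Rightarrow> bool" where
  "is_cycle V E p \<longleftrightarrow> is_path V E p \<and> length p \<ge> 3 \<and> E (last p) (hd p)"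

definition forest :: "'a set \<Rightarrow> ('a \<Rightarrow> 'a \<Rightarrow> bool) \<Rightarrow> bool" where
  "forest V E \<longleftrightarrow> simple_graph V E \<and> (\<nexists>p. is_cycle V E p)"

definition longest_path_length :: "'a set \<Rightarrow> ('a \<Rightarrow> 'a \<Rightarrow> bool) \<Rightarrow> nat" where
  "longest_path_length V E =
     (if \<exists>p. is_path V E p then Max {length p - 1 | p. is_path V E p} else 0)"

definition component :: "('a \<Rightarrow> 'a \<Rightarrow> bool) \<Rightarrow> 'a \<Rightarrow> 'a set" where
  "component E v = {u. E\<^sup>*\<^sup>* v u}"

definition gdist :: "('a \<Rightarrow> 'a \<Rightarrow> bool) \<Rightarrow> 'a \<Rightarrow> 'a \<Rightarrow> nat" where
  "gdist E u v = (LEAST n. (E ^^ n) u v)"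

definition diameter :: "('a \<Rightarrow> 'a \<Rightarrow> bool) \<Rightarrow> 'a set \<Rightarrow> nat" where
  "diameter E C = Max {gdist E u v | u v. u \<in> C \<and> v \<in> C}"

definition induced_is_path :: "('a \<Rightarrow> 'a \<Rightarrow> bool) \<Rightarrow> 'a set \<Rightarrow> bool" where
  "induced_is_path E C \<longleftrightarrow> (\<exists>p. p \<noteq> [] \<and> distinct p \<and> set p = C \<and>
     (\<forall>u\<in>C. \<forall>v\<in>C. E u v \<longleftrightarrow>
        (\<exists>i. Suc i < length p \<and> ((u = p ! i \<and> v = p ! Suc i) \<or> (v = p ! i \<and> u = p ! Suc i)))))"

text \<open>The coloring game. A position is a partial coloring c (colors are 0..<t);
  the boolean says whether it is Alice's turn.\<close>

definition legal :: "('a \<Rightarrow> 'a \<Rightarrow> bool) \<Rightarrow> nat \<Rightarrow> ('a \<Rightarrow> nat option) \<Rightarrow> 'a \<Rightarrow> nat \<Rightarrow> bool" where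
  "legal E t c v k \<longleftrightarrow> k < t \<and> \<not> (\<exists>u. E v u \<and> c u = Some k)"

definition blocked :: "'a set \<Rightarrow> ('a \<Rightarrow> 'a \<Rightarrow> bool) \<Rightarrow> nat \<Rightarrow> ('a \<Rightarrow> nat option) \<Rightarrow> bool" where
  "blocked V E t c \<longleftrightarrow> (\<exists>v\<in>V. c v = None \<and> (\<forall>k. \<not> legal E t c v k))"

inductive alice_wins :: "'a set \<Rightarrow> ('a \<Rightarrow> 'a \<Rightarrow> bool) \<Rightarrow> nat \<Rightarrow> ('a \<Rightarrow> nat option) \<Rightarrow> bool \<Rightarrow> bool"
  for V E t where
  all_colored: "\<forall>v\<in>V. c v \<noteq> None \<Longrightarrow> alice_wins V E t c turn"
| alice_move: "\<not> blocked V E t c \<Longrightarrow> v \<in> V \<Longrightarrow> c v = None \<Longrightarrow> legal E t c v k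
     \<Longrightarrow> alice_wins V E t (c(v := Some k)) False \<Longrightarrow> alice_wins V E t c True"
| bob_move: "\<not> blocked V E t c \<Longrightarrow>
     (\<forall>v k. v \<in> V \<longrightarrow> c v = None \<longrightarrow> legal E t c v k \<longrightarrow> alice_wins V E t (c(v := Some k)) True)
     \<Longrightarrow> alice_wins V E t c False"

definition game_chromatic_number :: "'a set \<Rightarrow> ('a \<Rightarrow> 'a \<Rightarrow> bool) \<Rightarrow> nat" where
  "game_chromatic_number V E = (LEAST t. alice_wins V E t (\<lambda>_. None) True)"

end

theory Submission
  imports Defs
begin


fun chain :: "('a \<Rightarrow> 'a \<Rightarrow> bool) \<Rightarrow> 'a list \<Rightarrow> bool" where
  "chain E (x#y#xs) = (E x y \<and> chain E (y#xs))"
| "chain E _ = True"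

lemma chain_iff: "chain E p \<longleftrightarrow> (\<forall>i. Suc i < length p \<longrightarrow> E (p!i) (p!Suc i))"
proof (induction E p rule: chain.induct)
  case (1 E x y xs)
  show ?case
  proof
    assume "chain E (x#y#xs)"
    then show "\<forall>i. Suc i < length (x#y#xs) \<longrightarrow> E ((x#y#xs)!i) ((x#y#xs)!Suc i)"
      using 1 by (auto simp: nth_Cons split: nat.split)
  next
    assume h: "\<forall>i. Suc i < length (x#y#xs) \<longrightarrow> E ((x#y#xs)!i) ((x#y#xs)!Suc i)"
    have "E x y" using h[rule_format, of 0] by simp
    moreover have "\<forall>i. Suc i < length (y#xs) \<longrightarrow> E ((y#xs)!i) ((y#xs)!Suc i)"
      using h by (metis Suc_less_eq length_Cons nth_Cons_Suc)
    ultimately show "chain E (x#y#xs)" using 1 by simp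
  qed
qed auto

lemma aw_true_cases:
  "alice_wins V E t c True \<Longrightarrow> (\<forall>v\<in>V. c v \<noteq> None) \<or> (\<not> blocked V E t c \<and>
     (\<exists>v k. v \<in> V \<and> c v = None \<and> legal E t c v k \<and> alice_wins V E t (c(v := Some k)) False))"
  by (erule alice_wins.cases) auto

lemma aw_false_cases:
  "alice_wins V E t c False \<Longrightarrow> (\<forall>v\<in>V. c v \<noteq> None) \<or> (\<not> blocked V E t c \<and>
     (\<forall>v k. v \<in> V \<longrightarrow> c v = None \<longrightarrow> legal E t c v k \<longrightarrow> alice_wins V E t (c(v := Some k)) True))"
  by (erule alice_wins.cases) auto

lemma blocked_lose: "blocked V E t c \<Longrightarrow> \<not> alice_wins V E t c turn"
proof
  assume b: "blocked V E t c" and a: "alice_wins V E t c turn"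
  show False using a
    by (cases rule: alice_wins.cases) (use b in \<open>auto simp: blocked_def\<close>)
qed

definition cnt :: "'a set \<Rightarrow> ('a \<Rightarrow> nat option) \<Rightarrow> nat" where
  "cnt V c = card {v\<in>V. c v = None}"

lemma cnt_upd: "finite V \<Longrightarrow> v \<in> V \<Longrightarrow> c v = None \<Longrightarrow> cnt V (c(v := Some k)) = cnt V c - 1"
proof -
  assume a: "finite V" "v \<in> V" "c v = None"
  have "{x\<in>V. (c(v := Some k)) x = None} = {x\<in>V. c x = None} - {v}" by auto
  then show ?thesis using a by (simp add: cnt_def)
qed

lemma cnt_pos: "finite V \<Longrightarrow> v \<in> V \<Longrightarrow> c v = None \<Longrightarrow> cnt V c > 0"
  unfolding cnt_def by (subst card_gt_0_iff) auto

lemma never_blocked_wins_both: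
  assumes fin: "finite V" and nb: "\<And>c. \<not> blocked V E t c"
  shows "alice_wins V E t c True \<and> alice_wins V E t c False"
proof (induction "cnt V c" arbitrary: c rule: less_induct)
  case less
  show ?case
  proof (cases "\<forall>v\<in>V. c v \<noteq> None")
    case True then show ?thesis by (simp add: alice_wins.all_colored)
  next
    case False
    then obtain v where v: "v \<in> V" "c v = None" by auto
    have lt: "\<And>w k. w \<in> V \<Longrightarrow> c w = None \<Longrightarrow> cnt V (c(w := Some k)) < cnt V c"
      using cnt_upd cnt_pos fin by (metis diff_less zero_less_one)
    from nb[of c] v obtain k where k: "legal E t c v k" by (auto simp: blocked_def)
    have "alice_wins V E t (c(v := Some k)) False" using less lt v by blast
    then have 1: "alice_wins V E t c True" using alice_wins.alice_move[OF nb v k] by simp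
    have 2: "alice_wins V E t c False"
      by (rule alice_wins.bob_move[OF nb]) (use less lt in blast)
    show ?thesis using 1 2 by simp
  qed
qed

lemma never_blocked_wins:
  "finite V \<Longrightarrow> (\<And>c. \<not> blocked V E t c) \<Longrightarrow> alice_wins V E t c True"
  using never_blocked_wins_both by blast



locale F =
  fixes V :: "'a set" and E :: "'a \<Rightarrow> 'a \<Rightarrow> bool"
  assumes forest: "forest V E"
begin

lemma finV: "finite V" using forest by (simp add: forest_def simple_graph_def)
lemma symE: "E u v \<Longrightarrow> E v u" using forest by (simp add: forest_def simple_graph_def)
lemma irr: "\<not> E v v" using forest by (simp add: forest_def simple_graph_def)
lemma inV1: "E u v \<Longrightarrow> u \<in> V" using forest by (simp add: forest_def simple_graph_def)
lemma inV2: "E u v \<Longrightarrow> v \<in> V" using forest by (simp add: forest_def simple_graph_def)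
lemma neq: "E u v \<Longrightarrow> u \<noteq> v" using irr by auto

lemma chain_set: "chain E (x#y#xs) \<Longrightarrow> set (x#y#xs) \<subseteq> V"
proof (induction xs arbitrary: x y)
  case Nil then show ?case using inV1 inV2 by auto
next
  case (Cons a xs) then show ?case using inV1 by auto
qed

lemma cyc: "chain E (x#y#xs) \<Longrightarrow> distinct (x#y#xs) \<Longrightarrow> 3 \<le> length (x#y#xs)
   \<Longrightarrow> E (last (x#y#xs)) x \<Longrightarrow> False"
proof -
  assume a: "chain E (x#y#xs)" "distinct (x#y#xs)" "3 \<le> length (x#y#xs)" "E (last (x#y#xs)) x"
  have "is_cycle V E (x#y#xs)"
    unfolding is_cycle_def is_path_def using a chain_set[OF a(1)] chain_iff[of E "x#y#xs"] by auto
  then show False using forest by (auto simp: forest_def)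
qed

lemma tri: "E a b \<Longrightarrow> E b c \<Longrightarrow> E c a \<Longrightarrow> False"
  using cyc[of a b "[c]"] neq by auto

lemma quad: "E a b \<Longrightarrow> E b c \<Longrightarrow> E c d \<Longrightarrow> E d a \<Longrightarrow> a \<noteq> c \<Longrightarrow> b \<noteq> d \<Longrightarrow> False"
  using cyc[of a b "[c,d]"] neq by auto

lemma pent: "E a b \<Longrightarrow> E b c \<Longrightarrow> E c d \<Longrightarrow> E d e \<Longrightarrow> E e a \<Longrightarrow> distinct [a,b,c,d,e] \<Longrightarrow> False"
  using cyc[of a b "[c,d,e]"] by auto

lemma hex: "E a b \<Longrightarrow> E b c \<Longrightarrow> E c d \<Longrightarrow> E d e \<Longrightarrow> E e f \<Longrightarrow> E f a \<Longrightarrow> distinct [a,b,c,d,e,f] \<Longrightarrow> False"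
  using cyc[of a b "[c,d,e,f]"] by auto

end

lemma noedge_nb: "(\<And>u v. \<not> E u v) \<Longrightarrow> \<not> blocked V E (Suc t) c"
  by (auto simp: blocked_def legal_def)

lemma big_t_nb:
  assumes fin: "finite V" and inV: "\<And>u v. E u v \<Longrightarrow> v \<in> V" and t: "card V < t"
  shows "\<not> blocked V E t c"
proof
  assume "blocked V E t c"
  then obtain v where v: "v \<in> V" "c v = None" "\<forall>k. \<not> legal E t c v k" by (auto simp: blocked_def)
  let ?S = "(\<lambda>u. the (c u)) ` {u\<in>V. E v u}"
  have "{..<t} \<subseteq> ?S"
  proof
    fix k assume "k \<in> {..<t}"
    then obtain u where "E v u" "c u = Some k" using v(3) by (auto simp: legal_def)
    then show "k \<in> ?S" using inV by force
  qed
  then have "card {..<t} \<le> card ?S" using fin by (intro card_mono) auto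
  also have "\<dots> \<le> card {u\<in>V. E v u}" using fin by (intro card_image_le) auto
  also have "\<dots> \<le> card V" using fin by (intro card_mono) auto
  finally show False using t by simp
qed



context F begin

lemma bob_block:
  assumes "E x u" "E u w" "w \<noteq> x" "c u = None" "c w = None" "c x = Some k" "k < 2"
    "\<forall>z. E w z \<longrightarrow> c z \<noteq> Some (1-k)"
  shows "\<not> alice_wins V E 2 c False"
proof
  assume a: "alice_wins V E 2 c False"
  have uV: "u \<in> V" "w \<in> V" using assms inV1 inV2 by auto
  have lg: "legal E 2 c w (1-k)" using assms by (auto simp: legal_def)
  have uw: "u \<noteq> w" using assms neq by auto
  let ?c = "c(w := Some (1-k))"
  have "blocked V E 2 ?c"
    unfolding blocked_def
  proof (intro bexI[of _ u] conjI allI)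
    show "?c u = None" using uw assms by simp
    fix k' show "\<not> legal E 2 ?c u k'"
    proof
      assume l: "legal E 2 ?c u k'"
      have "k' = k \<or> k' = 1 - k" using l assms(7) by (auto simp: legal_def)
      moreover have "?c x = Some k" using assms by simp
      moreover have "?c w = Some (1-k)" by simp
      moreover have "E u x" using assms symE by auto
      ultimately show False using l assms(2) by (auto simp: legal_def)
    qed
  qed (fact uV)
  moreover have "alice_wins V E 2 ?c True" using aw_false_cases[OF a] uV assms lg by auto
  ultimately show False using blocked_lose by blast
qed

lemma bob_P5:
  assumes e: "E v1 v2" "E v2 v3" "E v3 v4" "E v4 v5" and d: "distinct [v1,v2,v3,v4,v5]"
  shows "\<not> alice_wins V E 2 (\<lambda>_. None) True"
proof
  assume a: "alice_wins V E 2 (\<lambda>_. None) True"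
  have vV: "v1 \<in> V" "v2 \<in> V" "v3 \<in> V" "v4 \<in> V" "v5 \<in> V" using e inV1 inV2 by auto
  from aw_true_cases[OF a] vV obtain x k where x: "x \<in> V" "legal E 2 (\<lambda>_. None) x k"
    and a1: "alice_wins V E 2 ((\<lambda>_. None)(x := Some k)) False" by auto
  let ?c1 = "(\<lambda>_. None)(x := Some k)"
  have k2: "k < 2" using x by (auto simp: legal_def)
  show False
  proof (cases "\<exists>u w. E x u \<and> E u w \<and> w \<noteq> x")
    case True
    then obtain u w where uw: "E x u" "E u w" "w \<noteq> x" by auto
    have "\<not> alice_wins V E 2 ?c1 False"
    proof (rule bob_block[OF uw])
      show "?c1 u = None" using uw neq by auto
      show "?c1 w = None" using uw by auto
      show "?c1 x = Some k" by simp
      show "k < 2" by (fact k2)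
      show "\<forall>z. E w z \<longrightarrow> ?c1 z \<noteq> Some (1 - k)" using uw tri by auto
    qed
    then show False using a1 by simp
  next
    case False
    then have far: "\<And>y. y \<in> {v1,v2,v3,v4,v5} \<Longrightarrow> x \<noteq> y \<and> \<not> E x y \<and> \<not> E y x"
      using e d symE by (auto, metis+)
    let ?c2 = "?c1(v3 := Some 0)"
    have l3: "legal E 2 ?c1 v3 0" using far by (auto simp: legal_def)
    have x3: "x \<noteq> v3" using far by auto
    have "alice_wins V E 2 ?c2 True"
    proof -
      from aw_false_cases[OF a1] have "\<not> (\<forall>v\<in>V. ?c1 v \<noteq> None)" using vV x3 by auto
      with aw_false_cases[OF a1] have "\<forall>v k'. v \<in> V \<longrightarrow> ?c1 v = None \<longrightarrow> legal E 2 ?c1 v k' \<longrightarrow>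
        alice_wins V E 2 (?c1(v := Some k')) True" by blast
      then show ?thesis using l3 vV x3 by auto
    qed
    moreover have "\<not> (\<forall>v\<in>V. ?c2 v \<noteq> None)"
    proof -
      have "?c2 v1 = None" using far[of v1] d by auto
      then show ?thesis using vV by blast
    qed
    ultimately obtain z j where z: "z \<in> V" "?c2 z = None" "legal E 2 ?c2 z j"
      and a3: "alice_wins V E 2 (?c2(z := Some j)) False" using aw_true_cases by blast
    let ?c3 = "?c2(z := Some j)"
    have zx: "z \<noteq> x" "z \<noteq> v3" using z by (auto split: if_splits)
    show False
    proof (cases "z \<noteq> v1 \<and> z \<noteq> v2 \<and> \<not> E z v1")
      case True
      have "\<not> alice_wins V E 2 ?c3 False"
      proof (rule bob_block[of v3 v2 v1])
        show "E v3 v2" "E v2 v1" using e symE by auto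
        show "v1 \<noteq> v3" using d by auto
        show "?c3 v2 = None" "?c3 v1 = None" using True far d by auto
        show "?c3 v3 = Some 0" using zx by simp
        show "\<forall>y. E v1 y \<longrightarrow> ?c3 y \<noteq> Some (1 - 0)"
        proof (intro allI impI)
          fix y assume y: "E v1 y"
          have "y \<noteq> z" using True y symE by auto
          moreover have "y \<noteq> v3" using y e tri[of v1 v2 v3] symE by auto
          moreover have "y \<noteq> x" using y far[of v1] symE by auto
          ultimately show "?c3 y \<noteq> Some (1 - 0)" by simp
        qed
      qed simp
      then show False using a3 by simp
    next
      case False
      then have zc: "z = v1 \<or> z = v2 \<or> E z v1" by blast
      have e': "E v2 v1" "E v3 v2" "E v4 v3" "E v5 v4" using e symE by auto
      have n51: "\<not> E v5 v1" using pent[of v1 v2 v3 v4 v5] e d by blast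
      have n41: "\<not> E v4 v1" using quad[of v1 v2 v3 v4] e d by auto
      have n52: "\<not> E v5 v2" using quad[of v2 v3 v4 v5] e d by auto
      have n31: "\<not> E v3 v1" using tri[of v1 v2 v3] e by auto
      have "z \<noteq> v5" using zc d n51 by auto
      moreover have "z \<noteq> v4" using zc d n41 by auto
      moreover have "\<not> E z v5"
      proof
        assume z5: "E z v5"
        show False
        proof (cases "z = v1 \<or> z = v2")
          case True then show False using z5 n51 n52 symE by blast
        next
          case False
          then have z1: "E z v1" using zc by blast
          have "z \<noteq> v3" using z1 n31 by auto
          moreover have "z \<noteq> v4" using z1 n41 by auto
          moreover have "z \<noteq> v5" "z \<noteq> v1" using z1 z5 irr by auto
          ultimately have "distinct [v1,v2,v3,v4,v5,z]" using d False by auto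
          moreover have "E v5 z" using z5 symE by auto
          ultimately show False using hex[of v1 v2 v3 v4 v5 z] e z1 by blast
        qed
      qed
      ultimately have z5: "z \<noteq> v5 \<and> z \<noteq> v4 \<and> \<not> E z v5" by blast
      have "\<not> alice_wins V E 2 ?c3 False"
      proof (rule bob_block[of v3 v4 v5])
        show "E v3 v4" "E v4 v5" using e symE by auto
        show "v5 \<noteq> v3" using d by auto
        show "?c3 v4 = None" "?c3 v5 = None" using z5 far d by auto
        show "?c3 v3 = Some 0" using zx by simp
        show "\<forall>y. E v5 y \<longrightarrow> ?c3 y \<noteq> Some (1 - 0)"
        proof (intro allI impI)
          fix y assume y: "E v5 y"
          have "y \<noteq> z" using z5 y symE by auto
          moreover have "y \<noteq> v3" using y e tri[of v3 v4 v5] symE by auto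
          moreover have "y \<noteq> x" using y far[of v5] symE by auto
          ultimately show "?c3 y \<noteq> Some (1 - 0)" by simp
        qed
      qed simp
      then show False using a3 by simp
    qed
  qed
qed

end


context F begin

lemma blk1: "E v u \<Longrightarrow> c u = Some k \<Longrightarrow> k < t \<Longrightarrow> t \<le> 1 \<Longrightarrow> c v = None \<Longrightarrow> v \<in> V \<Longrightarrow> blocked V E t c"
  unfolding blocked_def legal_def by (intro bexI[of _ v]) auto

lemma edge_lose_gen:
  assumes "alice_wins V E t c turn" "E u v" "t \<le> 1"
  shows "c u = None \<Longrightarrow> c v = None \<Longrightarrow> False"
  using assms(1)
proof (induction rule: alice_wins.induct)
  case (all_colored c turn)
  have "u \<in> V" using assms(2) inV1 by blast
  then show ?case using all_colored by auto
next
  case (alice_move c w k)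
  have kt: "k < t" using alice_move.hyps(4) by (simp add: legal_def)
  show ?case
  proof (cases "w = u \<or> w = v")
    case True
    then have "blocked V E t (c(w := Some k))"
    proof
      assume "w = u" then show ?thesis
        using blk1[of v u "c(w := Some k)" k t] assms symE inV2 alice_move.prems neq kt by auto
    next
      assume "w = v" then show ?thesis
        using blk1[of u v "c(w := Some k)" k t] assms inV1 alice_move.prems neq kt by auto
    qed
    then show False using alice_move.hyps(5) blocked_lose by blast
  next
    case False then show ?thesis using alice_move by auto
  qed
next
  case (bob_move c)
  have uV: "u \<in> V" using assms inV1 by auto
  then obtain k where k: "legal E t c u k" using bob_move.hyps(1) bob_move.prems by (auto simp: blocked_def)
  have kt: "k < t" using k by (simp add: legal_def)
  have "alice_wins V E t (c(u := Some k)) True" using bob_move uV k by auto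
  moreover have "blocked V E t (c(u := Some k))"
    using blk1[of v u "c(u := Some k)" k t] assms symE inV2 bob_move.prems neq kt by auto
  ultimately show False using blocked_lose by blast
qed

lemma edge_lose: "E u v \<Longrightarrow> t \<le> 1 \<Longrightarrow> \<not> alice_wins V E t (\<lambda>_. None) True"
  using edge_lose_gen by blast

end


definition P5 :: "('a \<Rightarrow> 'a \<Rightarrow> bool) \<Rightarrow> bool" where
  "P5 E \<longleftrightarrow> (\<exists>a b c d e. distinct [a,b,c,d,e] \<and> E a b \<and> E b c \<and> E c d \<and> E d e)"
definition P4 :: "('a \<Rightarrow> 'a \<Rightarrow> bool) \<Rightarrow> bool" where
  "P4 E \<longleftrightarrow> (\<exists>a b c d. distinct [a,b,c,d] \<and> E a b \<and> E b c \<and> E c d)"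
definition S3 :: "('a \<Rightarrow> 'a \<Rightarrow> bool) \<Rightarrow> bool" where
  "S3 E \<longleftrightarrow> (\<forall>a b c d. distinct [a,b,c,d] \<and> E a b \<and> E b c \<and> E c d \<longrightarrow>
      (\<forall>z. E b z \<longrightarrow> z = a \<or> z = c) \<and> (\<forall>z. E c z \<longrightarrow> z = b \<or> z = d))"

context F begin

lemma L1:
  assumes np: "\<not> P5 E" and d: "distinct [a,b,c,d]" and e: "E a b" "E b c" "E c d"
    and y: "E b y" "y \<noteq> c" "E y z"
  shows "z = b"
proof (rule ccontr)
  assume zb: "z \<noteq> b"
  have "y \<noteq> b" using y neq by auto
  moreover have "y \<noteq> d" using y e tri[of b c d] symE by auto
  moreover have "z \<noteq> y" using y neq by auto
  moreover have "z \<noteq> c" using y e tri[of y b c] symE by auto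
  moreover have "z \<noteq> d" using y e d quad[of y b c d] symE by auto
  ultimately have "distinct [z,y,b,c,d]" using zb y d by auto
  moreover have "E z y" "E y b" using y symE by auto
  ultimately show False using np e unfolding P5_def by blast
qed

lemma L2:
  assumes np: "\<not> P5 E" and d: "distinct [a,b,c,d]" and e: "E a b" "E b c" "E c d"
    and y: "E c y" "y \<noteq> b" "E y z"
  shows "z = c"
  using L1[OF np, of d c b a y z] d e y symE by auto

lemma blocked_two: "E v x \<Longrightarrow> E v y \<Longrightarrow> c x = Some 0 \<Longrightarrow> c y = Some 1 \<Longrightarrow> c v = None \<Longrightarrow> v \<in> V
   \<Longrightarrow> blocked V E 2 c"
  unfolding blocked_def legal_def by (intro bexI[of _ v]) (auto simp: less_2_cases_iff)

text \<open>Bob's strategy keeping a closed set X untouched.\<close>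
lemma bob_X:
  assumes XV: "X \<subseteq> V" and bX: "b \<in> X"
    and cl: "\<And>x y. x \<in> X \<Longrightarrow> E x y \<Longrightarrow> y \<in> X"
    and BP: "\<And>x. x \<in> X \<Longrightarrow> \<exists>u w. E x u \<and> E u w \<and> w \<noteq> x"
    and HX: "\<And>c. (\<forall>x\<in>X. c x = None) \<Longrightarrow> (\<forall>v\<in>V - X. c v \<noteq> None) \<Longrightarrow>
               even (cnt V c) = (False = even (card V)) \<Longrightarrow> \<not> alice_wins V E 2 c False"
  shows "\<not> alice_wins V E 2 (\<lambda>_. None) True"
proof -
  define G where "G turn c \<longleftrightarrow> ((\<forall>x\<in>X. c x = None) \<and> even (cnt V c) = (turn = even (card V))) \<or>
     (\<not> turn \<and> (\<exists>x\<in>X. \<exists>k<2. c x = Some k \<and> (\<forall>y\<in>X. y \<noteq> x \<longrightarrow> c y = None)))" for turn c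
  have main: "alice_wins V E 2 c turn \<Longrightarrow> G turn c \<Longrightarrow> False" for c turn
  proof (induction rule: alice_wins.induct)
    case (all_colored c turn)
    show ?case
    proof (cases "\<forall>x\<in>X. c x = None")
      case True
      have "b \<in> V" using bX XV by auto
      then have "c b \<noteq> None" by (rule bspec[OF all_colored.hyps])
      moreover have "c b = None" by (rule bspec[OF True bX])
      ultimately show ?thesis by (rule notE)
    next
      case False
      then obtain x k where x: "x \<in> X" "k < 2" "c x = Some k" "\<forall>y\<in>X. y \<noteq> x \<longrightarrow> c y = None"
        using all_colored.prems unfolding G_def by auto
      from BP[OF x(1)] obtain u w where "E x u" by auto
      then have "u \<in> X" "u \<noteq> x" using cl x irr by auto
      then have uV: "u \<in> V" and cu: "c u = None" using x XV by auto
      have "c u \<noteq> None" by (rule bspec[OF all_colored.hyps uV])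
      then show ?thesis using cu by (rule notE)
    qed
  next
    case (alice_move c v k)
    have fr: "\<forall>x\<in>X. c x = None" and par: "even (cnt V c) = even (card V)"
      using alice_move.prems unfolding G_def by auto
    have k2: "k < 2" using alice_move.hyps(4) by (simp add: legal_def)
    have "G False (c(v := Some k))"
    proof (cases "v \<in> X")
      case True
      then show ?thesis unfolding G_def using fr k2 by (intro disjI2) auto
    next
      case False
      have "cnt V (c(v := Some k)) = cnt V c - 1" using cnt_upd[of V v c k, OF finV alice_move.hyps(2,3)] by auto
      moreover have "cnt V c > 0" using cnt_pos[of V v c, OF finV alice_move.hyps(2,3)] by auto
      ultimately have "even (cnt V (c(v := Some k))) = (\<not> even (cnt V c))" by auto
      then show ?thesis unfolding G_def using fr par False by auto
    qed
    then show ?case using alice_move.IH by blast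
  next
    case (bob_move c)
    have aw: "alice_wins V E 2 c False"
      by (rule alice_wins.bob_move, rule bob_move.hyps(1), use bob_move.IH in simp)
    have "G False c" by (rule bob_move.prems)
    then consider
      (fresh) "\<forall>x\<in>X. c x = None" "even (cnt V c) = (False = even (card V))"
      | (one) x k where "x \<in> X" "k < 2" "c x = Some k" "\<forall>y\<in>X. y \<noteq> x \<longrightarrow> c y = None"
      unfolding G_def by blast
    then show ?case
    proof cases
      case one
      from BP[OF one(1)] obtain u w where uw: "E x u" "E u w" "w \<noteq> x" by blast
      have uX: "u \<in> X" using cl[OF one(1) uw(1)] .
      have wX: "w \<in> X" using cl[OF uX uw(2)] .
      have ux: "u \<noteq> x" using uw(1) irr by metis
      have cu: "c u = None" using one(4) uX ux by simp
      have cw: "c w = None" using one(4) wX uw(3) by simp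
      have nz: "\<forall>z. E w z \<longrightarrow> c z \<noteq> Some (1 - k)"
      proof (intro allI impI)
        fix z assume z: "E w z"
        have "z \<in> X" using cl[OF wX z] .
        moreover have "z \<noteq> x"
        proof
          assume "z = x"
          then have "E w x" using z by simp
          then show False using tri[OF uw(1) uw(2)] by simp
        qed
        ultimately show "c z \<noteq> Some (1 - k)" using one(4) by simp
      qed
      have "\<not> alice_wins V E 2 c False" by (rule bob_block[OF uw cu cw one(3) one(2) nz])
      then show False using aw by simp
    next
      case fresh
      show False
      proof (cases "\<exists>y\<in>V - X. c y = None")
        case True
        then obtain y where y: "y \<in> V" "y \<notin> X" "c y = None" by blast
        have "\<exists>k. legal E 2 c y k" using bob_move.hyps(1) y unfolding blocked_def by blast
        then obtain k where k: "legal E 2 c y k" by blast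
        have "cnt V (c(y := Some k)) = cnt V c - 1" using cnt_upd[of V y c k, OF finV y(1,3)] by simp
        moreover have "cnt V c > 0" using cnt_pos[of V y c, OF finV y(1,3)] by simp
        ultimately have "even (cnt V (c(y := Some k))) = (\<not> even (cnt V c))" by auto
        moreover have "\<forall>x\<in>X. (c(y := Some k)) x = None" using fresh(1) y(2) by auto
        ultimately have "G True (c(y := Some k))" unfolding G_def using fresh(2) by simp
        moreover have "\<not> G True (c(y := Some k))" using bob_move.IH[rule_format, OF y(1) y(3) k] by simp
        ultimately show False by blast
      next
        case False
        then have "\<forall>v\<in>V - X. c v \<noteq> None" by auto
        then have "\<not> alice_wins V E 2 c False" using HX fresh by blast
        then show False using aw by simp
      qed
    qed
  qed
  have "G True (\<lambda>_. None)" unfolding G_def cnt_def by auto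
  then show ?thesis using main by blast
qed

end


context F begin

lemma Xprops:
  assumes np: "\<not> P5 E" and d: "distinct [a,b,c,d]" and e: "E a b" "E b c" "E c d"
  defines "X \<equiv> {b} \<union> {y. E b y} \<union> {y. E c y}"
  shows "X \<subseteq> V" "b \<in> X" "\<And>x y. x \<in> X \<Longrightarrow> E x y \<Longrightarrow> y \<in> X"
    "\<And>x. x \<in> X \<Longrightarrow> \<exists>u w. E x u \<and> E u w \<and> w \<noteq> x"
    "\<And>y. E b y \<Longrightarrow> y \<noteq> c \<Longrightarrow> E y z \<Longrightarrow> z = b"
    "\<And>y. E c y \<Longrightarrow> y \<noteq> b \<Longrightarrow> E y z \<Longrightarrow> z = c"
proof -
  show "X \<subseteq> V" unfolding X_def using inV2 e inV1 by auto
  show "b \<in> X" unfolding X_def by simp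
  show l1: "\<And>y. E b y \<Longrightarrow> y \<noteq> c \<Longrightarrow> E y z \<Longrightarrow> z = b" for z using L1[OF np d e] by blast
  show l2: "\<And>y. E c y \<Longrightarrow> y \<noteq> b \<Longrightarrow> E y z \<Longrightarrow> z = c" for z using L2[OF np d e] by blast
  show "\<And>x y. x \<in> X \<Longrightarrow> E x y \<Longrightarrow> y \<in> X"
  proof -
    fix x y assume x: "x \<in> X" and xy: "E x y"
    show "y \<in> X"
    proof (cases "x = b")
      case True then show ?thesis using xy unfolding X_def by simp
    next
      case xb: False
      show ?thesis
      proof (cases "x = c")
        case True then show ?thesis using xy unfolding X_def by simp
      next
        case False
        then have "E b x \<or> E c x" using x xb unfolding X_def by simp
        then show ?thesis
        proof
          assume "E b x" then have "y = b" using l1 False xy by blast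
          then show ?thesis unfolding X_def by simp
        next
          assume "E c x" then have "y = c" using l2 xb xy by blast
          then show ?thesis unfolding X_def using e(2) by simp
        qed
      qed
    qed
  qed
  show "\<And>x. x \<in> X \<Longrightarrow> \<exists>u w. E x u \<and> E u w \<and> w \<noteq> x"
  proof -
    fix x assume x: "x \<in> X"
    have ba: "E b a" "E c b" "E d c" using e symE by auto
    have dd: "a \<noteq> c" "b \<noteq> d" "c \<noteq> a" using d by auto
    show "\<exists>u w. E x u \<and> E u w \<and> w \<noteq> x"
    proof (cases "x = b")
      case True then show ?thesis using e(2,3) dd by blast
    next
      case xb: False
      show ?thesis
      proof (cases "x = c")
        case True then show ?thesis using ba(2,1) dd by blast
      next
        case False
        then have "E b x \<or> E c x" using x xb unfolding X_def by simp
        then show ?thesis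
        proof
          assume "E b x" then have "E x b" using symE by blast
          then show ?thesis using e(2) False by blast
        next
          assume "E c x" then have "E x c" using symE by blast
          then show ?thesis using ba(2) xb by blast
        qed
      qed
    qed
  qed
qed

lemma bob_even:
  assumes np: "\<not> P5 E" and d: "distinct [a,b,c,d]" and e: "E a b" "E b c" "E c d"
    and s3: "S3 E" and ev: "even (card V)"
  shows "\<not> alice_wins V E 2 (\<lambda>_. None) True"
proof -
  define X where "X \<equiv> {b} \<union> {y. E b y} \<union> {y. E c y}"
  note XP = Xprops[OF np d e, folded X_def]
  have nb: "\<forall>z. E b z \<longrightarrow> z = a \<or> z = c" and nc: "\<forall>z. E c z \<longrightarrow> z = b \<or> z = d"
    using s3 d e unfolding S3_def by blast+
  have X4: "X = {a,b,c,d}" unfolding X_def using nb nc e symE by auto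
  have c4: "card X = 4" using X4 d by simp
  show ?thesis
  proof (rule bob_X[OF XP(1,2,3,4)])
    fix cc assume fr: "\<forall>x\<in>X. cc x = None" and oc: "\<forall>v\<in>V - X. cc v \<noteq> None"
      and par: "even (cnt V cc) = (False = even (card V))"
    have "{v\<in>V. cc v = None} = X"
    proof
      show "{v\<in>V. cc v = None} \<subseteq> X"
      proof
        fix v assume "v \<in> {v\<in>V. cc v = None}"
        then have "v \<in> V" "cc v = None" by auto
        then show "v \<in> X" using oc by (metis DiffI)
      qed
      show "X \<subseteq> {v\<in>V. cc v = None}" using fr XP(1) by auto
    qed
    then have "cnt V cc = 4" unfolding cnt_def using c4 by simp
    then show "\<not> alice_wins V E 2 cc False" using par ev by simp
  qed
qed

lemma bob_nonS3:
  assumes np: "\<not> P5 E" and d: "distinct [a,b,c,d]" and e: "E a b" "E b c" "E c d"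
    and f: "E b f" "f \<noteq> a" "f \<noteq> c"
  shows "\<not> alice_wins V E 2 (\<lambda>_. None) True"
proof -
  define X where "X \<equiv> {b} \<union> {y. E b y} \<union> {y. E c y}"
  note XP = Xprops[OF np d e, folded X_def]
  show ?thesis
  proof (rule bob_X[OF XP(1,2,3,4)])
    fix cc :: "'a \<Rightarrow> nat option" assume fr: "\<forall>x\<in>X. cc x = None" and oc: "\<forall>v\<in>V - X. cc v \<noteq> None"
    have ba: "E b a" "E c b" "E d c" using e symE by auto
    have aX: "a \<in> X" "c \<in> X" "d \<in> X" "f \<in> X" "b \<in> X" unfolding X_def using ba f e by auto
    have aV: "a \<in> V" "b \<in> V" "c \<in> V" "f \<in> V" "d \<in> V" using aX XP(1) by auto
    have na: "\<And>y. E a y \<Longrightarrow> y = b" using XP(5)[OF ba(1)] d by auto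
    have nf: "\<And>y. E f y \<Longrightarrow> y = b" using XP(5)[OF f(1) f(3)] by auto
    have nd: "\<And>y. E d y \<Longrightarrow> y = c" using XP(6)[OF e(3)] d by auto
    have fd: "f \<noteq> d" using tri[of b c d] e f symE by auto
    have fb: "f \<noteq> b" using f irr by auto
    have dist: "a \<noteq> b" "a \<noteq> c" "b \<noteq> c" "b \<noteq> d" "a \<noteq> d" "c \<noteq> d" "f \<noteq> b" "f \<noteq> d"
      using d fd fb by auto
    have cN: "cc a = None" "cc b = None" "cc c = None" "cc d = None" "cc f = None" using fr aX by auto
    show "\<not> alice_wins V E 2 cc False"
    proof
      assume aw: "alice_wins V E 2 cc False"
      have la: "legal E 2 cc a 0" unfolding legal_def using na cN by auto
      let ?c1 = "cc(a := Some 0)"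
      have "\<not> (\<forall>v\<in>V. cc v \<noteq> None)" using aV cN by auto
      then have "\<forall>v k. v \<in> V \<longrightarrow> cc v = None \<longrightarrow> legal E 2 cc v k \<longrightarrow> alice_wins V E 2 (cc(v := Some k)) True"
        using aw_false_cases[OF aw] by blast
      then have a1: "alice_wins V E 2 ?c1 True" using la aV cN by blast
      have "\<not> (\<forall>v\<in>V. ?c1 v \<noteq> None)" using aV cN dist by auto
      then obtain z j where z: "z \<in> V" "?c1 z = None" "legal E 2 ?c1 z j"
        and a2: "alice_wins V E 2 (?c1(z := Some j)) False" using aw_true_cases[OF a1] by blast
      let ?c2 = "?c1(z := Some j)"
      have za: "z \<noteq> a" using z(2) by (auto split: if_splits)
      have zX: "z \<in> X" using z(1,2) za oc by (metis DiffI fun_upd_other)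
      have j2: "j < 2" using z(3) by (simp add: legal_def)
      have c2X: "\<And>y. y \<in> X \<Longrightarrow> y \<noteq> a \<Longrightarrow> y \<noteq> z \<Longrightarrow> ?c2 y = None" using fr by auto
      consider "z = b" | "z = c" | "z = f" | "z \<noteq> b" "z \<noteq> c" "z \<noteq> f" by blast
      then show False
      proof cases
        case 1
        have "j \<noteq> 0" using z(3) ba(1) 1 unfolding legal_def by auto
        then have j1: "j = 1" using j2 by auto
        have "\<not> alice_wins V E 2 ?c2 False"
        proof (rule bob_block[OF e(2) e(3)])
          show "d \<noteq> b" "?c2 c = None" "?c2 d = None" using dist c2X aX 1 by auto
          show "?c2 b = Some j" using 1 by simp
          show "j < 2" by (fact j2)
          show "\<forall>y. E d y \<longrightarrow> ?c2 y \<noteq> Some (1 - j)" using nd c2X aX dist 1 by auto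
        qed
        then show False using a2 by simp
      next
        case 2
        show False
        proof (cases "j = 0")
          case False
          then have "j = 1" using j2 by auto
          then have "blocked V E 2 ?c2"
            using blocked_two[OF ba(1) e(2), of ?c2] 2 dist aV cN by auto
          then show False using a2 blocked_lose by blast
        next
          case True
          have "\<not> alice_wins V E 2 ?c2 False"
          proof (rule bob_block[OF e(1) f(1)])
            show "f \<noteq> a" "?c2 b = None" "?c2 f = None" using f dist c2X aX 2 by auto
            show "?c2 a = Some 0" using 2 dist by simp
            show "\<forall>y. E f y \<longrightarrow> ?c2 y \<noteq> Some (1 - 0)" using nf c2X aX dist 2 by auto
          qed simp
          then show False using a2 by simp
        qed
      next
        case 3
        show False
        proof (cases "j = 0")
          case False
          then have "j = 1" using j2 by auto
          then have "blocked V E 2 ?c2"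
            using blocked_two[OF ba(1) f(1), of ?c2] 3 f aV cN dist by auto
          then show False using a2 blocked_lose by blast
        next
          case True
          have "\<not> alice_wins V E 2 ?c2 False"
          proof (rule bob_block[OF e(1) e(2)])
            show "c \<noteq> a" "?c2 b = None" "?c2 c = None" using f dist c2X aX 3 by auto
            show "?c2 a = Some 0" using 3 f by simp
            show "\<forall>y. E c y \<longrightarrow> ?c2 y \<noteq> Some (1 - 0)"
            proof (intro allI impI)
              fix y assume "E c y"
              then have "y \<in> X" using XP(3) aX by blast
              then show "?c2 y \<noteq> Some (1 - 0)" using fr True by auto
            qed
          qed simp
          then show False using a2 by simp
        qed
      next
        case 4
        have "\<not> alice_wins V E 2 ?c2 False"
        proof (rule bob_block[OF e(1) f(1)])
          show "f \<noteq> a" "?c2 b = None" "?c2 f = None" using f dist c2X aX 4 by auto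
          show "?c2 a = Some 0" using za by simp
          show "\<forall>y. E f y \<longrightarrow> ?c2 y \<noteq> Some (1 - 0)" using nf c2X aX dist 4 by auto
        qed simp
        then show False using a2 by simp
      qed
    qed
  qed
qed

end


definition ok :: "('a \<Rightarrow> 'a \<Rightarrow> bool) \<Rightarrow> ('a \<Rightarrow> nat option) \<Rightarrow> 'a \<Rightarrow> bool" where
  "ok E c v \<longleftrightarrow> ((\<forall>w. E v w \<longrightarrow> c w \<noteq> None) \<and> (\<exists>j. legal E 2 c v j)) \<or> (\<forall>w. E v w \<longrightarrow> c w = None)"

definition GB :: "'a set \<Rightarrow> ('a \<Rightarrow> 'a \<Rightarrow> bool) \<Rightarrow> ('a \<Rightarrow> nat option) \<Rightarrow> bool" where
  "GB V E c \<longleftrightarrow> (\<forall>v\<in>V. c v = None \<longrightarrow> ok E c v) \<and> (P4 E \<longrightarrow> even (cnt V c))"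

lemma legal_cong: "(\<forall>w. E v w \<longrightarrow> c w = c' w) \<Longrightarrow> legal E t c v j = legal E t c' v j"
  by (auto simp: legal_def)

lemma ok_cong: "(\<forall>w. E v w \<longrightarrow> c w = c' w) \<Longrightarrow> ok E c v = ok E c' v"
proof -
  assume h: "\<forall>w. E v w \<longrightarrow> c w = c' w"
  then have "\<And>j. legal E 2 c v j = legal E 2 c' v j" by (rule legal_cong)
  then show ?thesis unfolding ok_def using h by auto
qed

lemma ok_legal: "ok E c v \<Longrightarrow> \<exists>j. legal E 2 c v j"
proof -
  assume h: "ok E c v"
  show ?thesis
  proof (cases "\<forall>w. E v w \<longrightarrow> c w = None")
    case True
    then have "legal E 2 c v 0" unfolding legal_def by auto
    then show ?thesis by auto
  next
    case False then show ?thesis using h unfolding ok_def by auto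
  qed
qed

lemma legal_other: "(\<forall>w. E v w \<longrightarrow> c w = None \<or> c w = Some k) \<Longrightarrow> k < 2 \<Longrightarrow> legal E 2 c v (1-k)"
proof -
  assume h: "\<forall>w. E v w \<longrightarrow> c w = None \<or> c w = Some k" and k: "k < 2"
  have "1 - k \<noteq> k" using k by arith
  then show ?thesis unfolding legal_def using h k by auto
qed

lemma ok_allcol: "(\<forall>w. E v w \<longrightarrow> c w = Some k) \<Longrightarrow> k < 2 \<Longrightarrow> ok E c v"
proof -
  assume h: "\<forall>w. E v w \<longrightarrow> c w = Some k" and k: "k < 2"
  have "legal E 2 c v (1-k)" using legal_other[of E v c k] h k by auto
  then show ?thesis unfolding ok_def using h by auto
qed

lemma ok_nb: "(\<forall>v\<in>V. c v = None \<longrightarrow> ok E c v) \<Longrightarrow> \<not> blocked V E 2 c"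
proof
  assume h: "\<forall>v\<in>V. c v = None \<longrightarrow> ok E c v" and "blocked V E 2 c"
  then obtain v where v: "v \<in> V" "c v = None" "\<forall>k. \<not> legal E 2 c v k" unfolding blocked_def by auto
  then have "ok E c v" using h by simp
  then show False using ok_legal[OF \<open>ok E c v\<close>] v(3) by blast
qed

lemma even_match:
  assumes "finite U" "\<forall>a b. M a b \<longrightarrow> M b a" "\<forall>a\<in>U. \<exists>!b. b \<in> U \<and> M a b" "\<forall>a. \<not> M a a"
  shows "even (card U)"
  using assms
proof (induction "card U" arbitrary: U rule: less_induct)
  case less
  show ?case
  proof (cases "U = {}")
    case True then show ?thesis by simp
  next
    case False
    then obtain a where a: "a \<in> U" by auto
    then obtain b where b: "b \<in> U" "M a b" using less.prems(3) by blast
    have ab: "a \<noteq> b" using b less.prems(4) by auto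
    let ?U = "U - {a, b}"
    have "card {a,b} \<le> card U" using a b less.prems(1) by (intro card_mono) auto
    moreover have "card ?U = card U - card {a,b}" using a b less.prems(1)
      by (intro card_Diff_subset) auto
    ultimately have cU: "card U = card ?U + 2" using ab by simp
    have "\<forall>x\<in>?U. \<exists>!y. y \<in> ?U \<and> M x y"
    proof
      fix x assume x: "x \<in> ?U"
      then obtain y where y: "y \<in> U" "M x y" "\<forall>y'. y' \<in> U \<and> M x y' \<longrightarrow> y' = y"
        using less.prems(3) by (metis Diff_iff)
      have "y \<noteq> a"
      proof
        assume "y = a" then have "M a x" using y less.prems(2) by blast
        then have "x = b" using less.prems(3) a b x by (metis Diff_iff)
        then show False using x by simp
      qed
      moreover have "y \<noteq> b"
      proof
        assume "y = b" then have "M b x" using y less.prems(2) by blast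
        moreover have "M b a" using b less.prems(2) by blast
        ultimately have "x = a" using less.prems(3) b a x by (metis Diff_iff)
        then show False using x by simp
      qed
      ultimately show "\<exists>!y. y \<in> ?U \<and> M x y" using y by blast
    qed
    then have "even (card ?U)" using less cU by auto
    then show ?thesis using cU by simp
  qed
qed

locale FA = F +
  assumes np: "\<not> P5 E" and s3: "S3 E" and par: "P4 E \<longrightarrow> odd (card V)"
begin

lemma mkP4: "E a b \<Longrightarrow> E b c \<Longrightarrow> E c d \<Longrightarrow> a \<noteq> c \<Longrightarrow> b \<noteq> d \<Longrightarrow> distinct [a,b,c,d]"
proof -
  assume h: "E a b" "E b c" "E c d" "a \<noteq> c" "b \<noteq> d"
  have "a \<noteq> d"
  proof
    assume "a = d" then have "E c a" using h by simp
    then show False using tri[OF h(1,2)] by simp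
  qed
  then show ?thesis using h neq by auto
qed

lemma p4s:
  assumes "E a b" "E b c" "E c d" "a \<noteq> c" "b \<noteq> d"
  shows "\<forall>z. E b z \<longrightarrow> z = a \<or> z = c" "\<forall>z. E c z \<longrightarrow> z = b \<or> z = d"
    "\<forall>z. E a z \<longrightarrow> z = b" "\<forall>z. E d z \<longrightarrow> z = c" "P4 E"
proof -
  have d: "distinct [a,b,c,d]" using mkP4 assms by blast
  show "\<forall>z. E b z \<longrightarrow> z = a \<or> z = c" "\<forall>z. E c z \<longrightarrow> z = b \<or> z = d"
    using s3 d assms unfolding S3_def by blast+
  show "\<forall>z. E a z \<longrightarrow> z = b" using L2[OF np, of d c b a a] d assms symE by auto
  show "\<forall>z. E d z \<longrightarrow> z = c" using L2[OF np d assms(1-3)] d assms by auto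
  show "P4 E" unfolding P4_def using d assms by blast
qed

lemma Qf: "\<forall>v\<in>V. c v = None \<longrightarrow> ok E c v \<Longrightarrow> v \<in> V \<Longrightarrow> c v = None \<Longrightarrow> E v w \<Longrightarrow> c w = None
   \<Longrightarrow> E v w' \<Longrightarrow> c w' = None"
proof -
  assume h: "\<forall>v\<in>V. c v = None \<longrightarrow> ok E c v" "v \<in> V" "c v = None" "E v w" "c w = None" "E v w'"
  then have "ok E c v" by simp
  then have "\<forall>w. E v w \<longrightarrow> c w = None" unfolding ok_def using h(4,5) by auto
  then show ?thesis using h(6) by simp
qed

end


context FA begin

lemma safe_move:
  assumes okc: "\<forall>v\<in>V. c v = None \<longrightarrow> ok E c v"
    and pc: "P4 E \<longrightarrow> odd (cnt V c)"
    and ex: "v0 \<in> V" "c v0 = None"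
  shows "\<exists>y j. y \<in> V \<and> c y = None \<and> legal E 2 c y j \<and> GB V E (c(y := Some j))"
proof (cases "\<exists>y\<in>V. c y = None \<and> (\<forall>w. E y w \<longrightarrow> c w = None \<longrightarrow> (\<forall>z. E w z \<longrightarrow> z = y))")
  case True
  then obtain y where y: "y \<in> V" "c y = None" and sf: "\<forall>w. E y w \<longrightarrow> c w = None \<longrightarrow> (\<forall>z. E w z \<longrightarrow> z = y)"
    by auto
  from okc y have "ok E c y" by simp
  then obtain j where j: "legal E 2 c y j" using ok_legal by metis
  have j2: "j < 2" using j by (simp add: legal_def)
  let ?c = "c(y := Some j)"
  have A: "\<forall>v\<in>V. ?c v = None \<longrightarrow> ok E ?c v"
  proof (intro ballI impI)
    fix v assume v: "v \<in> V" "?c v = None"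
    then have vy: "v \<noteq> y" and cv: "c v = None" by (auto split: if_splits)
    show "ok E ?c v"
    proof (cases "E v y")
      case True
      have "\<forall>z. E v z \<longrightarrow> z = y" using sf symE[OF True] cv by simp
      then have "\<forall>w. E v w \<longrightarrow> ?c w = Some j" by simp
      then show ?thesis using ok_allcol j2 by metis
    next
      case False
      then have "\<forall>w. E v w \<longrightarrow> c w = ?c w" by auto
      then have "ok E c v = ok E ?c v" by (rule ok_cong)
      then show ?thesis using okc v(1) cv by simp
    qed
  qed
  have B: "P4 E \<longrightarrow> even (cnt V ?c)"
  proof
    assume "P4 E"
    then have "odd (cnt V c)" using pc by simp
    moreover have "cnt V ?c = cnt V c - 1" using cnt_upd[of V y c j, OF finV y] .
    moreover have "cnt V c > 0" using cnt_pos[of V y c, OF finV y] .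
    ultimately show "even (cnt V ?c)" by simp
  qed
  have "GB V E ?c" unfolding GB_def using A B by simp
  then show ?thesis using y j by (intro exI[of _ y] exI[of _ j]) simp
next
  case False
  have ns: "\<exists>w z. E y w \<and> c w = None \<and> E w z \<and> z \<noteq> y" if "y \<in> V" "c y = None" for y
    using False that by auto
  have str: "\<exists>w m m' p. E v w \<and> c w = None \<and> E w m \<and> c m = None \<and> E m m' \<and> m' \<noteq> w \<and> E p w \<and> p \<noteq> m
     \<and> ((m = v \<and> p \<noteq> v) \<or> (m \<noteq> v \<and> p = v))" if v: "v \<in> V" "c v = None" for v
  proof -
    obtain w z where wz: "E v w" "c w = None" "E w z" "z \<noteq> v" using ns[OF v] by blast
    have wV: "w \<in> V" using wz inV2 by blast
    obtain m m' where mm: "E w m" "c m = None" "E m m'" "m' \<noteq> w" using ns[OF wV wz(2)] by blast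
    define p where "p = (if m = v then z else v)"
    have "E p w" using wz symE unfolding p_def by auto
    moreover have "p \<noteq> m" using wz unfolding p_def by auto
    moreover have "(m = v \<and> p \<noteq> v) \<or> (m \<noteq> v \<and> p = v)" using wz unfolding p_def by auto
    ultimately show ?thesis using wz mm by blast
  qed
  obtain w0 m0 m0' p0 where s0: "E v0 w0" "c w0 = None" "E w0 m0" "c m0 = None" "E m0 m0'" "m0' \<noteq> w0" "E p0 w0" "p0 \<noteq> m0"
    using str[OF ex] by blast
  have P4E: "P4 E" using p4s(5)[OF s0(7) s0(3) s0(5) s0(8)] s0(6) by metis
  have oddc: "odd (cnt V c)" using pc P4E by simp
  define U where "U = {v\<in>V. c v = None}"
  define M where "M a b \<longleftrightarrow> E a b \<and> ((\<forall>x. E a x \<longrightarrow> x = b) \<or> (\<forall>x. E b x \<longrightarrow> x = a))" for a b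
  have "even (card U)"
  proof (rule even_match)
    show "finite U" unfolding U_def using finV by simp
    show "\<forall>a b. M a b \<longrightarrow> M b a" unfolding M_def using symE by blast
    show "\<forall>a. \<not> M a a" unfolding M_def using irr by simp
    show "\<forall>a\<in>U. \<exists>!b. b \<in> U \<and> M a b"
    proof
      fix v assume "v \<in> U"
      then have v: "v \<in> V" "c v = None" unfolding U_def by auto
      obtain w m m' p where s: "E v w" "c w = None" "E w m" "c m = None" "E m m'" "m' \<noteq> w" "E p w" "p \<noteq> m"
        "(m = v \<and> p \<noteq> v) \<or> (m \<noteq> v \<and> p = v)"
        using str[OF v] by blast
      note st = p4s[OF s(7) s(3) s(5) s(8) s(6)[symmetric]]
      show "\<exists>!b. b \<in> U \<and> M v b"
      proof (cases "m = v")
        case True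
        then have pv: "p \<noteq> v" using s(9) by simp
        have m'V: "m' \<in> V" using s(5) inV2 by blast
        have Evm': "E v m'" using s(5) True by simp
        have cm': "c m' = None" using Qf[OF okc v s(1) s(2) Evm'] .
        have lm': "\<forall>x. E m' x \<longrightarrow> x = v" using st(4) True by simp
        have Mm: "M v m'" unfolding M_def using Evm' lm' by blast
        show ?thesis
        proof (rule ex1I[of _ m'])
          show "m' \<in> U \<and> M v m'" using Mm m'V cm' unfolding U_def by blast
          fix b assume b: "b \<in> U \<and> M v b"
          then have Evb: "E v b" unfolding M_def by blast
          have bwm: "b = w \<or> b = m'" using st(2) Evb True by blast
          have "b \<noteq> w"
          proof
            assume bw: "b = w"
            have n1: "\<not> (\<forall>x. E v x \<longrightarrow> x = w)" using Evm' s(6) by blast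
            have n2: "\<not> (\<forall>x. E w x \<longrightarrow> x = v)" using symE[OF s(7)] pv by blast
            have "M v w" using b bw by blast
            then show False using n1 n2 unfolding M_def by blast
          qed
          then show "b = m'" using bwm by blast
        qed
      next
        case False
        then have pv: "p = v" using s(9) by simp
        have lv: "\<forall>x. E v x \<longrightarrow> x = w" using st(3) pv by blast
        show ?thesis
        proof (rule ex1I[of _ w])
          have "w \<in> V" using s(1) inV2 by blast
          then have "w \<in> U" unfolding U_def using s(2) by blast
          moreover have "M v w" unfolding M_def using s(1) lv by blast
          ultimately show "w \<in> U \<and> M v w" by blast
          fix b assume "b \<in> U \<and> M v b"
          then have "E v b" unfolding M_def by blast
          then show "b = w" using lv by blast
        qed
      qed
    qed
  qed
  then show ?thesis using oddc unfolding U_def cnt_def by simp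
qed

end


context FA begin

lemma nb1:
  assumes okc: "\<forall>v\<in>V. c v = None \<longrightarrow> ok E c v" and x: "x \<in> V" "c x = None" "legal E 2 c x k"
  shows "\<not> blocked V E 2 (c(x := Some k))"
proof
  assume "blocked V E 2 (c(x := Some k))"
  then obtain v where v: "v \<in> V" "(c(x := Some k)) v = None" "\<forall>j. \<not> legal E 2 (c(x := Some k)) v j"
    unfolding blocked_def by auto
  have vx: "v \<noteq> x" and cv: "c v = None" using v(2) by (auto split: if_splits)
  have k2: "k < 2" using x(3) by (simp add: legal_def)
  show False
  proof (cases "E v x")
    case True
    have "\<forall>w. E v w \<longrightarrow> c w = None" using Qf[OF okc v(1) cv True x(2)] by blast
    then have "\<forall>w. E v w \<longrightarrow> (c(x := Some k)) w = None \<or> (c(x := Some k)) w = Some k" by simp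
    then have "legal E 2 (c(x := Some k)) v (1-k)" using legal_other k2 by metis
    then show False using v(3) by blast
  next
    case False
    then have cg: "\<forall>w. E v w \<longrightarrow> c w = (c(x := Some k)) w" by auto
    have "ok E c v" using okc v(1) cv by simp
    then obtain j where "legal E 2 c v j" using ok_legal by metis
    then have "legal E 2 (c(x := Some k)) v j" using legal_cong[of E v c "c(x := Some k)", OF cg] by blast
    then show False using v(3) by blast
  qed
qed

lemma cnt2:
  assumes "P4 E \<longrightarrow> even (cnt V c)" "x \<in> V" "c x = None" "y \<in> V" "(c(x := Some k)) y = None"
  shows "P4 E \<longrightarrow> even (cnt V ((c(x := Some k))(y := Some j)))"
    and "cnt V ((c(x := Some k))(y := Some j)) < cnt V c"
proof -
  have c1: "cnt V (c(x := Some k)) = cnt V c - 1" using cnt_upd[of V x c k, OF finV assms(2,3)] .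
  have c2: "cnt V ((c(x := Some k))(y := Some j)) = cnt V (c(x := Some k)) - 1"
    using cnt_upd[of V y "c(x := Some k)" j, OF finV assms(4,5)] .
  have p: "cnt V (c(x := Some k)) > 0" using cnt_pos[of V y "c(x := Some k)", OF finV assms(4,5)] .
  show "P4 E \<longrightarrow> even (cnt V ((c(x := Some k))(y := Some j)))" using assms(1) c1 c2 p by auto
  show "cnt V ((c(x := Some k))(y := Some j)) < cnt V c" using c1 c2 p by auto
qed

lemma resp:
  assumes gb: "GB V E c" and x: "x \<in> V" "c x = None" "legal E 2 c x k"
    and na: "\<not> (\<forall>v\<in>V. (c(x := Some k)) v \<noteq> None)"
  shows "\<exists>y j. y \<in> V \<and> (c(x := Some k)) y = None \<and> legal E 2 (c(x := Some k)) y j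
     \<and> GB V E ((c(x := Some k))(y := Some j))"
proof -
  have okc: "\<forall>v\<in>V. c v = None \<longrightarrow> ok E c v" and pe: "P4 E \<longrightarrow> even (cnt V c)"
    using gb unfolding GB_def by auto
  have k2: "k < 2" using x(3) by (simp add: legal_def)
  let ?c1 = "c(x := Some k)"
  show ?thesis
  proof (cases "\<exists>u w. E x u \<and> c u = None \<and> E u w \<and> w \<noteq> x \<and> c w = None")
    case True
    then obtain u w0 where u: "E x u" "c u = None" "E u w0" "w0 \<noteq> x" "c w0 = None" by blast
    have uV: "u \<in> V" using u(1) inV2 by blast
    have ux: "u \<noteq> x" using u(1) irr by metis
    have Eux: "E u x" using symE[OF u(1)] .
    have Nu: "\<And>z. E u z \<Longrightarrow> c z = None" using Qf[OF okc uV u(2) Eux x(2)] by blast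
    show ?thesis
    proof (cases "\<exists>y y'. E u y \<and> y \<noteq> x \<and> E y y' \<and> y' \<noteq> u")
      case True
      then obtain y y' where yy: "E u y" "y \<noteq> x" "E y y'" "y' \<noteq> u" by blast
      note st = p4s[OF u(1) yy(1) yy(3) yy(2)[symmetric] yy(4)[symmetric]]
      have yV: "y \<in> V" using yy(1) inV2 by blast
      have cy: "c y = None" using Nu[OF yy(1)] .
      have y'x: "y' \<noteq> x"
      proof
        assume "y' = x" then have "E y x" using yy(3) by simp
        then show False using tri[OF u(1) yy(1)] by simp
      qed
      have Eyu: "E y u" using symE[OF yy(1)] .
      have Ny: "\<And>z. E y z \<Longrightarrow> c z = None" using Qf[OF okc yV cy Eyu u(2)] by blast
      have c1y: "?c1 y = None" using cy yy(2) by simp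
      have ly: "legal E 2 ?c1 y k"
        unfolding legal_def
      proof (intro conjI notI)
        show "k < 2" by (fact k2)
        assume "\<exists>z. E y z \<and> ?c1 z = Some k"
        then obtain z where z: "E y z" "?c1 z = Some k" by blast
        have "z \<noteq> x"
        proof
          assume "z = x" then have "E y x" using z by simp
          then show False using tri[OF u(1) yy(1)] by simp
        qed
        then show False using z Ny[OF z(1)] by simp
      qed
      let ?c2 = "?c1(y := Some k)"
      have A: "\<forall>v\<in>V. ?c2 v = None \<longrightarrow> ok E ?c2 v"
      proof (intro ballI impI)
        fix v assume v: "v \<in> V" "?c2 v = None"
        then have vx: "v \<noteq> x" "v \<noteq> y" and cv: "c v = None" by (auto split: if_splits)
        show "ok E ?c2 v"
        proof (cases "v = u")
          case True
          have "\<forall>w. E v w \<longrightarrow> ?c2 w = Some k"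
          proof (intro allI impI)
            fix w assume "E v w"
            then have "w = x \<or> w = y" using st(1) True by blast
            then show "?c2 w = Some k" by auto
          qed
          then show ?thesis using ok_allcol k2 by metis
        next
          case vu: False
          show ?thesis
          proof (cases "v = y'")
            case True
            have "\<forall>w. E v w \<longrightarrow> ?c2 w = Some k"
            proof (intro allI impI)
              fix w assume "E v w"
              then have "w = y" using st(4) True by blast
              then show "?c2 w = Some k" by auto
            qed
            then show ?thesis using ok_allcol k2 by metis
          next
            case False
            have nvx: "\<not> E v x" using st(3) vu symE by blast
            have nvy: "\<not> E v y" using st(2) vu False symE by blast
            have "\<forall>w. E v w \<longrightarrow> c w = ?c2 w"
            proof (intro allI impI)
              fix w assume "E v w"
              then have "w \<noteq> x" "w \<noteq> y" using nvx nvy by auto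
              then show "c w = ?c2 w" by simp
            qed
            then have "ok E c v = ok E ?c2 v" by (rule ok_cong)
            then show ?thesis using okc v(1) cv by simp
          qed
        qed
      qed
      have B: "P4 E \<longrightarrow> even (cnt V ?c2)" using cnt2(1)[OF pe x(1,2) yV c1y] .
      have "GB V E ?c2" unfolding GB_def using A B by simp
      then show ?thesis using yV c1y ly by (intro exI[of _ y] exI[of _ k]) simp
    next
      case False
      then have sm: "\<And>y y'. E u y \<Longrightarrow> y \<noteq> x \<Longrightarrow> E y y' \<Longrightarrow> y' = u" by blast
      have c1u: "?c1 u = None" using u(2) ux by simp
      have lu: "legal E 2 ?c1 u (1-k)"
      proof (rule legal_other[OF _ k2])
        show "\<forall>w. E u w \<longrightarrow> ?c1 w = None \<or> ?c1 w = Some k"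
        proof (intro allI impI)
          fix w assume "E u w"
          then show "?c1 w = None \<or> ?c1 w = Some k" using Nu by (cases "w = x") auto
        qed
      qed
      let ?c2 = "?c1(u := Some (1-k))"
      have k2': "1 - k < 2" by simp
      have A: "\<forall>v\<in>V. ?c2 v = None \<longrightarrow> ok E ?c2 v"
      proof (intro ballI impI)
        fix v assume v: "v \<in> V" "?c2 v = None"
        then have vx: "v \<noteq> x" "v \<noteq> u" and cv: "c v = None" by (auto split: if_splits)
        show "ok E ?c2 v"
        proof (cases "E v u")
          case True
          have "\<forall>w. E v w \<longrightarrow> ?c2 w = Some (1-k)"
          proof (intro allI impI)
            fix w assume "E v w"
            then have "w = u" using sm[OF symE[OF True] vx(1)] by blast
            then show "?c2 w = Some (1-k)" by simp
          qed
          then show ?thesis using ok_allcol k2' by metis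
        next
          case nvu: False
          show ?thesis
          proof (cases "E v x")
            case True
            have "\<forall>w. E v w \<longrightarrow> ?c2 w = Some k"
            proof (intro allI impI)
              fix z assume vz: "E v z"
              have "z = x"
              proof (rule ccontr)
                assume zx: "z \<noteq> x"
                have zv: "z \<noteq> v" using vz irr by metis
                have zu: "z \<noteq> u" using vz nvu by blast
                have zw: "z \<noteq> w0"
                proof
                  assume "z = w0"
                  then have "E v w0" using vz by simp
                  moreover have "E w0 u" using symE[OF u(3)] .
                  ultimately show False using quad[of v w0 u x] Eux symE[OF True] vx(2) u(4) by blast
                qed
                have vw: "v \<noteq> w0" using nvu symE[OF u(3)] by blast
                have xw: "x \<noteq> w0" using u(4) by blast
                have uw: "u \<noteq> w0" using u(3) irr by metis
                have "distinct [z, v, x, u, w0]" using zx zv zu zw vx vw xw uw ux by auto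
                moreover have "E z v" using symE[OF vz] .
                ultimately show False using np True u(1) u(3) unfolding P5_def by blast
              qed
              then show "?c2 z = Some k" using ux by simp
            qed
            then show ?thesis using ok_allcol k2 by metis
          next
            case False
            have "\<forall>w. E v w \<longrightarrow> c w = ?c2 w"
            proof (intro allI impI)
              fix w assume "E v w"
              then have "w \<noteq> x" "w \<noteq> u" using False nvu by auto
              then show "c w = ?c2 w" by simp
            qed
            then have "ok E c v = ok E ?c2 v" by (rule ok_cong)
            then show ?thesis using okc v(1) cv by simp
          qed
        qed
      qed
      have B: "P4 E \<longrightarrow> even (cnt V ?c2)" using cnt2(1)[OF pe x(1,2) uV c1u] .
      have "GB V E ?c2" unfolding GB_def using A B by simp
      then show ?thesis using uV c1u lu by (intro exI[of _ u] exI[of _ "1-k"]) simp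
    qed
  next
    case False
    have okc1: "\<forall>v\<in>V. ?c1 v = None \<longrightarrow> ok E ?c1 v"
    proof (intro ballI impI)
      fix v assume v: "v \<in> V" "?c1 v = None"
      then have vx: "v \<noteq> x" and cv: "c v = None" by (auto split: if_splits)
      show "ok E ?c1 v"
      proof (cases "E v x")
        case True
        have Nv: "\<And>z. E v z \<Longrightarrow> c z = None" using Qf[OF okc v(1) cv True x(2)] by blast
        have "\<forall>w. E v w \<longrightarrow> ?c1 w = Some k"
        proof (intro allI impI)
          fix z assume vz: "E v z"
          have "z = x"
          proof (rule ccontr)
            assume "z \<noteq> x"
            then have "E x v \<and> c v = None \<and> E v z \<and> z \<noteq> x \<and> c z = None"
              using symE[OF True] cv vz Nv[OF vz] by blast
            then show False using False by blast
          qed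
          then show "?c1 z = Some k" by simp
        qed
        then show ?thesis using ok_allcol k2 by metis
      next
        case nvx: False
        have "\<forall>w. E v w \<longrightarrow> c w = ?c1 w"
        proof (intro allI impI)
          fix w assume "E v w"
          then have "w \<noteq> x" using nvx by auto
          then show "c w = ?c1 w" by simp
        qed
        then have "ok E c v = ok E ?c1 v" by (rule ok_cong)
        then show ?thesis using okc v(1) cv by simp
      qed
    qed
    have pc1: "P4 E \<longrightarrow> odd (cnt V ?c1)"
    proof
      assume "P4 E"
      then have "even (cnt V c)" using pe by simp
      moreover have "cnt V ?c1 = cnt V c - 1" using cnt_upd[of V x c k, OF finV x(1,2)] .
      moreover have "cnt V c > 0" using cnt_pos[of V x c, OF finV x(1,2)] .
      ultimately show "odd (cnt V ?c1)" by simp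
    qed
    obtain v0 where v0: "v0 \<in> V" "?c1 v0 = None" using na by blast
    show ?thesis using safe_move[OF okc1 pc1 v0] .
  qed
qed

lemma main_alice: "GB V E c \<Longrightarrow> alice_wins V E 2 c False"
proof (induction "cnt V c" arbitrary: c rule: less_induct)
  case less
  show ?case
  proof (cases "\<forall>v\<in>V. c v \<noteq> None")
    case True then show ?thesis by (rule alice_wins.all_colored)
  next
    case False
    have okc: "\<forall>v\<in>V. c v = None \<longrightarrow> ok E c v" and pe: "P4 E \<longrightarrow> even (cnt V c)"
      using less.prems unfolding GB_def by auto
    show ?thesis
    proof (rule alice_wins.bob_move)
      show "\<not> blocked V E 2 c" using ok_nb[OF okc] .
      show "\<forall>v k. v \<in> V \<longrightarrow> c v = None \<longrightarrow> legal E 2 c v k \<longrightarrow> alice_wins V E 2 (c(v := Some k)) True"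
      proof (intro allI impI)
        fix x k assume x: "x \<in> V" "c x = None" "legal E 2 c x k"
        let ?c1 = "c(x := Some k)"
        show "alice_wins V E 2 ?c1 True"
        proof (cases "\<forall>v\<in>V. ?c1 v \<noteq> None")
          case True then show ?thesis by (rule alice_wins.all_colored)
        next
          case False
          from resp[OF less.prems x False] obtain y j where y: "y \<in> V" "?c1 y = None"
            "legal E 2 ?c1 y j" "GB V E (?c1(y := Some j))" by blast
          have "cnt V (?c1(y := Some j)) < cnt V c" using cnt2(2)[OF pe x(1,2) y(1,2)] .
          then have "alice_wins V E 2 (?c1(y := Some j)) False" using less.hyps y(4) by blast
          moreover have "\<not> blocked V E 2 ?c1" using nb1[OF okc x] .
          ultimately show ?thesis using alice_wins.alice_move[OF _ y(1-3)] by blast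
        qed
      qed
    qed
  qed
qed

lemma alice_init: "alice_wins V E 2 (\<lambda>_. None) True"
proof (cases "V = {}")
  case True then show ?thesis by (intro alice_wins.all_colored) simp
next
  case False
  then obtain v0 where v0: "v0 \<in> V" by blast
  have okc: "\<forall>v\<in>V. (\<lambda>_. None) v = None \<longrightarrow> ok E (\<lambda>_. None) v" unfolding ok_def by simp
  have "cnt V (\<lambda>_. None) = card V" unfolding cnt_def by simp
  then have pc: "P4 E \<longrightarrow> odd (cnt V (\<lambda>_. None))" using par by simp
  obtain y j where y: "y \<in> V" "(\<lambda>_. None) y = (None :: nat option)" "legal E 2 (\<lambda>_. None) y j"
    "GB V E ((\<lambda>_. None)(y := Some j))"
    using safe_move[OF okc pc v0] by auto
  have "alice_wins V E 2 ((\<lambda>_. None)(y := Some j)) False" using main_alice[OF y(4)] .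
  moreover have "\<not> blocked V E 2 (\<lambda>_. None)" using ok_nb[OF okc] .
  ultimately show ?thesis using alice_wins.alice_move[OF _ y(1-3)] by blast
qed

end


lemma rp3: "((E::'a\<Rightarrow>'a\<Rightarrow>bool) ^^ 3) x y \<longleftrightarrow> (\<exists>a b. E x a \<and> E a b \<and> E b y)"
  by (auto simp: numeral_3_eq_3 relpowp_Suc_left OO_def)
lemma rp2: "((E::'a\<Rightarrow>'a\<Rightarrow>bool) ^^ 2) x y \<longleftrightarrow> (\<exists>a. E x a \<and> E a y)"
  by (auto simp: numeral_2_eq_2 relpowp_Suc_left OO_def)
lemma rp1: "((E::'a\<Rightarrow>'a\<Rightarrow>bool) ^^ 1) x y \<longleftrightarrow> E x y"
  by (simp only: relpowp_1)
lemma rp0: "((E::'a\<Rightarrow>'a\<Rightarrow>bool) ^^ 0) x y \<longleftrightarrow> x = y"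
  by auto

lemma ex3: "(\<exists>i. Suc i < length [a,b,c,d::'a] \<and> P i) \<longleftrightarrow> P 0 \<or> P 1 \<or> P 2"
  by (auto simp: less_Suc_eq numeral_2_eq_2)

context F begin

lemma path_len: "is_path V E p \<Longrightarrow> length p \<le> card V"
  unfolding is_path_def using finV by (metis card_mono distinct_card)

lemma LPset_fin: "finite {length p - 1 | p. is_path V E p}"
proof (rule finite_subset)
  show "{length p - 1 | p. is_path V E p} \<subseteq> {..card V}" using path_len by fastforce
qed simp

lemma LP_ge: "is_path V E p \<Longrightarrow> length p - 1 \<le> longest_path_length V E"
  unfolding longest_path_length_def using LPset_fin by (auto intro!: Max_ge)

lemma LP_attain: "0 < longest_path_length V E \<Longrightarrow>
    \<exists>p. is_path V E p \<and> length p - 1 = longest_path_length V E"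
proof -
  assume pos: "0 < longest_path_length V E"
  then have ex: "\<exists>p. is_path V E p" unfolding longest_path_length_def by (auto split: if_splits)
  then have "longest_path_length V E = Max {length p - 1 | p. is_path V E p}"
    unfolding longest_path_length_def by simp
  moreover have "Max {length p - 1 | p. is_path V E p} \<in> {length p - 1 | p. is_path V E p}"
    using LPset_fin ex by (intro Max_in) auto
  ultimately show ?thesis by auto
qed

lemma path_edge: "is_path V E p \<Longrightarrow> Suc i < length p \<Longrightarrow> E (p!i) (p!Suc i)"
  unfolding is_path_def by blast

lemma path_nth_neq: "is_path V E p \<Longrightarrow> i < length p \<Longrightarrow> j < length p \<Longrightarrow> i \<noteq> j \<Longrightarrow> p!i \<noteq> p!j"
  unfolding is_path_def by (simp add: nth_eq_iff_index_eq)

lemma P5_iff: "P5 E \<longleftrightarrow> 4 \<le> longest_path_length V E"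
proof
  assume "P5 E"
  then obtain a b c d e where h: "distinct [a,b,c,d,e]" "E a b" "E b c" "E c d" "E d e"
    unfolding P5_def by blast
  have "chain E [a,b,c,d,e]" using h by simp
  then have "is_path V E [a,b,c,d,e]" unfolding is_path_def
    using h chain_set[of a b "[c,d,e]"] chain_iff[of E "[a,b,c,d,e]"] by auto
  from LP_ge[OF this] show "4 \<le> longest_path_length V E" by simp
next
  assume "4 \<le> longest_path_length V E"
  with LP_attain obtain p where p: "is_path V E p" "length p - 1 = longest_path_length V E" by force
  then have l: "5 \<le> length p" using \<open>4 \<le> _\<close> by simp
  have dd: "\<And>i j. i < 5 \<Longrightarrow> j < 5 \<Longrightarrow> i \<noteq> j \<Longrightarrow> p!i \<noteq> p!j"
    using path_nth_neq[OF p(1)] l by auto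
  have "distinct [p!0, p!1, p!2, p!3, p!4]"
    using dd[of 0 1] dd[of 0 2] dd[of 0 3] dd[of 0 4] dd[of 1 2] dd[of 1 3] dd[of 1 4]
      dd[of 2 3] dd[of 2 4] dd[of 3 4] by auto
  moreover have "E (p!0) (p!1)" "E (p!1) (p!2)" "E (p!2) (p!3)" "E (p!3) (p!4)"
    using path_edge[OF p(1), of 0] path_edge[OF p(1), of 1] path_edge[OF p(1), of 2]
      path_edge[OF p(1), of 3] l by (simp_all add: numeral_eq_Suc)
  ultimately show "P5 E" unfolding P5_def by blast
qed

lemma P4_iff: "P4 E \<longleftrightarrow> 3 \<le> longest_path_length V E"
proof
  assume "P4 E"
  then obtain a b c d where h: "distinct [a,b,c,d]" "E a b" "E b c" "E c d"
    unfolding P4_def by blast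
  have "chain E [a,b,c,d]" using h by simp
  then have "is_path V E [a,b,c,d]" unfolding is_path_def
    using h chain_set[of a b "[c,d]"] chain_iff[of E "[a,b,c,d]"] by auto
  from LP_ge[OF this] show "3 \<le> longest_path_length V E" by simp
next
  assume "3 \<le> longest_path_length V E"
  with LP_attain obtain p where p: "is_path V E p" "length p - 1 = longest_path_length V E" by force
  then have l: "4 \<le> length p" using \<open>3 \<le> _\<close> by simp
  have dd: "\<And>i j. i < 4 \<Longrightarrow> j < 4 \<Longrightarrow> i \<noteq> j \<Longrightarrow> p!i \<noteq> p!j"
    using path_nth_neq[OF p(1)] l by auto
  have "distinct [p!0, p!1, p!2, p!3]"
    using dd[of 0 1] dd[of 0 2] dd[of 0 3] dd[of 1 2] dd[of 1 3] dd[of 2 3] by auto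
  moreover have "E (p!0) (p!1)" "E (p!1) (p!2)" "E (p!2) (p!3)"
    using path_edge[OF p(1), of 0] path_edge[OF p(1), of 1] path_edge[OF p(1), of 2]
      l by (simp_all add: numeral_eq_Suc)
  ultimately show "P4 E" unfolding P4_def by blast
qed

lemma Edge_iff: "(\<exists>a b. E a b) \<longleftrightarrow> 1 \<le> longest_path_length V E"
proof
  assume "\<exists>a b. E a b"
  then obtain a b where h: "E a b" by blast
  have "is_path V E [a,b]" unfolding is_path_def using h inV1 inV2 neq[OF h]
    by (auto simp: less_Suc_eq)
  from LP_ge[OF this] show "1 \<le> longest_path_length V E" by simp
next
  assume "1 \<le> longest_path_length V E"
  with LP_attain obtain p where p: "is_path V E p" "length p - 1 = longest_path_length V E" by force
  then have l: "2 \<le> length p" using \<open>1 \<le> _\<close> by simp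
  then have "E (p!0) (p!1)" using path_edge[OF p(1), of 0] by simp
  then show "\<exists>a b. E a b" by blast
qed

end


context F begin

lemma rt_sym: "E\<^sup>*\<^sup>* u v \<Longrightarrow> E\<^sup>*\<^sup>* v u"
proof (induction rule: rtranclp_induct)
  case base then show ?case by simp
next
  case (step y z)
  then show ?case using converse_rtranclp_into_rtranclp[OF symE[OF step(2)] step(3)] by simp
qed

lemma rt_closed: "E\<^sup>*\<^sup>* u z \<Longrightarrow> u \<in> S \<Longrightarrow> (\<And>x y. x \<in> S \<Longrightarrow> E x y \<Longrightarrow> y \<in> S) \<Longrightarrow> z \<in> S"
  by (induction rule: rtranclp_induct) auto

lemma comp_V: "v \<in> V \<Longrightarrow> component E v \<subseteq> V"
  unfolding component_def using rt_closed[of v _ V] inV2 by blast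

lemma gdist_le: "(E ^^ n) u v \<Longrightarrow> gdist E u v \<le> n"
  unfolding gdist_def by (rule Least_le)

lemma gdist_eq: "(E ^^ n) u v \<Longrightarrow> (\<And>m. m < n \<Longrightarrow> \<not> (E ^^ m) u v) \<Longrightarrow> gdist E u v = n"
  unfolding gdist_def by (rule Least_equality) (auto simp: not_less[symmetric])

lemma diam_fin: "finite C \<Longrightarrow> finite {gdist E u v | u v. u \<in> C \<and> v \<in> C}"
proof -
  assume "finite C"
  then have "finite ((\<lambda>(u,v). gdist E u v) ` (C \<times> C))" by simp
  moreover have "{gdist E u v | u v. u \<in> C \<and> v \<in> C} = (\<lambda>(u,v). gdist E u v) ` (C \<times> C)" by auto
  ultimately show ?thesis by simp
qed

lemma diam3:
  assumes "finite C" "\<And>u v. u \<in> C \<Longrightarrow> v \<in> C \<Longrightarrow> gdist E u v \<le> 3" "u0 \<in> C" "v0 \<in> C" "gdist E u0 v0 = 3"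
  shows "diameter E C = 3"
  unfolding diameter_def
proof (rule Max_eqI)
  show "finite {gdist E u v | u v. u \<in> C \<and> v \<in> C}" using diam_fin assms(1) .
  show "\<And>y. y \<in> {gdist E u v | u v. u \<in> C \<and> v \<in> C} \<Longrightarrow> y \<le> 3" using assms(2) by auto
  show "3 \<in> {gdist E u v | u v. u \<in> C \<and> v \<in> C}" using assms(3-5) by force
qed

lemma diam3_inv:
  assumes "finite C" "v \<in> C" "diameter E C = 3"
  shows "\<exists>u\<in>C. \<exists>w\<in>C. gdist E u w = 3"
proof -
  have "Max {gdist E u v | u v. u \<in> C \<and> v \<in> C} \<in> {gdist E u v | u v. u \<in> C \<and> v \<in> C}"
    using diam_fin[OF assms(1)] assms(2) by (intro Max_in) auto
  then show ?thesis using assms(3) unfolding diameter_def by auto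
qed

lemma extra_false:
  assumes np: "\<not> P5 E" and d: "distinct [a,b,c,d]" and e: "E a b" "E b c" "E c d"
    and f: "E b f" "f \<noteq> a" "f \<noteq> c"
    and DC: "\<forall>v\<in>V. diameter E (component E v) = 3 \<longrightarrow> induced_is_path E (component E v)"
  shows False
proof -
  define X where "X \<equiv> {b} \<union> {y. E b y} \<union> {y. E c y}"
  note XP = Xprops[OF np d e, folded X_def]
  have CX: "component E b = X"
  proof
    show "component E b \<subseteq> X" unfolding component_def using rt_closed[of b _ X] XP(2,3) by blast
    show "X \<subseteq> component E b"
    proof
      fix y assume "y \<in> X"
      then have "y = b \<or> E b y \<or> E c y" unfolding X_def by auto
      then show "y \<in> component E b" unfolding component_def
        using e(2) by (auto intro: rtranclp.rtrancl_into_rtrancl)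
    qed
  qed
  have bV: "b \<in> V" using e inV1 by blast
  have finC: "finite X" using XP(1) finV finite_subset by blast
  have fd: "f \<noteq> d" using tri[of b c d] e f symE by auto
  have l1: "\<And>y z. E b y \<Longrightarrow> y \<noteq> c \<Longrightarrow> E y z \<Longrightarrow> z = b" using XP(5) by blast
  have walk: "\<exists>n\<le>3. (E ^^ n) u v" if u: "u \<in> X" and v: "v \<in> X" for u v
  proof -
    have u': "u = b \<or> E u b \<or> E u c" and v': "v = b \<or> E b v \<or> E c v"
      using u v symE unfolding X_def by auto
    have Ebc: "E b c" "E c b" using e(2) symE by auto
    from u' v' show ?thesis
    proof (elim disjE)
      assume "u = b" "v = b" then show ?thesis by (intro exI[of _ 0]) auto
    next
      assume "u = b" "E b v" then show ?thesis by (intro exI[of _ 1]) (auto simp: rp1)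
    next
      assume "u = b" "E c v" then show ?thesis using Ebc by (intro exI[of _ 2]) (auto simp: rp2)
    next
      assume "E u b" "v = b" then show ?thesis by (intro exI[of _ 1]) (auto simp: rp1)
    next
      assume "E u b" "E b v" then show ?thesis by (intro exI[of _ 2]) (auto simp: rp2)
    next
      assume "E u b" "E c v" then show ?thesis using Ebc by (intro exI[of _ 3]) (auto simp: rp3)
    next
      assume "E u c" "v = b" then show ?thesis using Ebc by (intro exI[of _ 2]) (auto simp: rp2)
    next
      assume "E u c" "E b v" then show ?thesis using Ebc by (intro exI[of _ 3]) (auto simp: rp3)
    next
      assume "E u c" "E c v" then show ?thesis by (intro exI[of _ 2]) (auto simp: rp2)
    qed
  qed
  have g3: "gdist E f d = 3"
  proof (rule gdist_eq)
    show "(E ^^ 3) f d" unfolding rp3 using symE[OF f(1)] e(2,3) by blast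
    fix m assume "m < (3::nat)"
    then have "m = 0 \<or> m = 1 \<or> m = 2" by auto
    then show "\<not> (E ^^ m) f d"
    proof (elim disjE)
      assume "m = 0" then show ?thesis using fd by simp
    next
      assume "m = 1"
      have "\<not> E f d" using quad[of f b c d] symE[OF f(1)] e(2,3) f(3) d symE by auto
      then show ?thesis using \<open>m = 1\<close> rp1 by metis
    next
      assume "m = 2"
      have "\<not> (\<exists>y. E f y \<and> E y d)"
      proof
        assume "\<exists>y. E f y \<and> E y d"
        then obtain y where "E f y" "E y d" by blast
        then have "y = b" using l1[OF f(1) f(3)] by blast
        then show False using \<open>E y d\<close> tri[of b c d] e symE by metis
      qed
      then show ?thesis using \<open>m = 2\<close> rp2 by metis
    qed
  qed
  have fX: "f \<in> X" "d \<in> X" "a \<in> X" "c \<in> X" "b \<in> X" unfolding X_def using f e symE by auto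
  have "diameter E X = 3"
  proof (rule diam3[OF finC _ fX(1) fX(2) g3])
    fix u v assume "u \<in> X" "v \<in> X"
    then obtain n where "n \<le> 3" "(E ^^ n) u v" using walk by blast
    then show "gdist E u v \<le> 3" using gdist_le by fastforce
  qed
  then have "induced_is_path E X" using DC bV CX by metis
  then obtain p where p: "distinct p" "set p = X" and pe: "\<forall>u\<in>X. \<forall>v\<in>X. E u v \<longleftrightarrow>
        (\<exists>i. Suc i < length p \<and> ((u = p ! i \<and> v = p ! Suc i) \<or> (v = p ! i \<and> u = p ! Suc i)))"
    unfolding induced_is_path_def by blast
  obtain i where i: "i < length p" "b = p!i" using fX(5) p(2) by (metis in_set_conv_nth)
  have nb: "y = p!(Suc i) \<or> (0 < i \<and> y = p!(i - 1))" if y: "E b y" "y \<in> X" for y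
  proof -
    obtain j where j: "Suc j < length p" "(b = p ! j \<and> y = p ! Suc j) \<or> (y = p ! j \<and> b = p ! Suc j)"
      using pe fX(5) y by blast
    from j(2) show ?thesis
    proof
      assume h: "b = p ! j \<and> y = p ! Suc j"
      then have "j = i" using i p(1) j(1) nth_eq_iff_index_eq by fastforce
      then show ?thesis using h by simp
    next
      assume h: "y = p ! j \<and> b = p ! Suc j"
      then have "Suc j = i" using i p(1) j(1) nth_eq_iff_index_eq by fastforce
      then show ?thesis using h by auto
    qed
  qed
  have "E b a" using e symE by blast
  from nb[OF this fX(3)] nb[OF e(2) fX(4)] nb[OF f(1) fX(1)] d f
  show False by auto
qed

lemma DC_S3:
  assumes np: "\<not> P5 E"
    and DC: "\<forall>v\<in>V. diameter E (component E v) = 3 \<longrightarrow> induced_is_path E (component E v)"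
  shows "S3 E"
  unfolding S3_def
proof (intro allI impI)
  fix a b c d assume h: "distinct [a,b,c,d] \<and> E a b \<and> E b c \<and> E c d"
  then have d: "distinct [a,b,c,d]" and e: "E a b" "E b c" "E c d" by auto
  have A: "\<forall>z. E b z \<longrightarrow> z = a \<or> z = c"
  proof (intro allI impI)
    fix z assume z: "E b z"
    show "z = a \<or> z = c"
    proof (rule ccontr)
      assume "\<not> (z = a \<or> z = c)"
      then have "z \<noteq> a" "z \<noteq> c" by auto
      then show False using extra_false[OF np d e z _ _ DC] by blast
    qed
  qed
  have d': "distinct [d,c,b,a]" using d by auto
  have e': "E d c" "E c b" "E b a" using e symE by blast+
  have B: "\<forall>z. E c z \<longrightarrow> z = b \<or> z = d"
  proof (intro allI impI)
    fix z assume z: "E c z"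
    show "z = b \<or> z = d"
    proof (rule ccontr)
      assume "\<not> (z = b \<or> z = d)"
      then have "z \<noteq> d" "z \<noteq> b" by auto
      then show False using extra_false[OF np d' e' z _ _ DC] by blast
    qed
  qed
  show "(\<forall>z. E b z \<longrightarrow> z = a \<or> z = c) \<and> (\<forall>z. E c z \<longrightarrow> z = b \<or> z = d)" using A B by (rule conjI)
qed

lemma S3_DC:
  assumes np: "\<not> P5 E" and s3: "S3 E" and v: "v \<in> V" and dm: "diameter E (component E v) = 3"
  shows "induced_is_path E (component E v)"
proof -
  let ?C = "component E v"
  have finC: "finite ?C" using comp_V[OF v] finV finite_subset by blast
  have vC: "v \<in> ?C" unfolding component_def by simp
  obtain u w where uw: "u \<in> ?C" "w \<in> ?C" "gdist E u w = 3" using diam3_inv[OF finC vC dm] by blast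
  have ru: "E\<^sup>*\<^sup>* v u" and rw: "E\<^sup>*\<^sup>* v w" using uw unfolding component_def by auto
  have ruw: "E\<^sup>*\<^sup>* u w" using rtranclp_trans[OF rt_sym[OF ru] rw] .
  then have exn: "\<exists>n. (E ^^ n) u w" using rtranclp_imp_relpowp by metis
  have w3: "(E ^^ 3) u w" using LeastI_ex[OF exn] uw(3) unfolding gdist_def by simp
  have lt: "\<not> (E ^^ m) u w" if "m < 3" for m
    using not_less_Least[of m "\<lambda>n. (E ^^ n) u w"] that uw(3) unfolding gdist_def by simp
  obtain x y where xy: "E u x" "E x y" "E y w" using w3 unfolding rp3 by blast
  have l1: "\<not> E u w" using lt[of 1] unfolding rp1 by simp
  have uy: "u \<noteq> y"
  proof
    assume "u = y" then show False using l1 xy(3) by simp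
  qed
  have xw: "x \<noteq> w"
  proof
    assume "x = w" then show False using l1 xy(1) by simp
  qed
  have uw': "u \<noteq> w" using lt[of 0] unfolding rp0 by simp
  have d: "distinct [u,x,y,w]" using uy xw uw' neq[OF xy(1)] neq[OF xy(2)] neq[OF xy(3)] by simp
  have pre: "distinct [u,x,y,w] \<and> E u x \<and> E x y \<and> E y w" using d xy by simp
  have s3i: "(\<forall>z. E x z \<longrightarrow> z = u \<or> z = y) \<and> (\<forall>z. E y z \<longrightarrow> z = x \<or> z = w)"
    using s3 pre unfolding S3_def by (elim allE[of _ u] allE[of _ x] allE[of _ y] allE[of _ w]) (rule mp)
  have Nx: "\<And>z. E x z \<Longrightarrow> z = u \<or> z = y" and Ny: "\<And>z. E y z \<Longrightarrow> z = x \<or> z = w"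
    using s3i by auto
  have d': "distinct [w,y,x,u]" using d by auto
  have Nu: "\<And>z. E u z \<Longrightarrow> z = x"
    using L2[OF np d' symE[OF xy(3)] symE[OF xy(2)] symE[OF xy(1)] symE[OF xy(1)] uy] by blast
  have Nw: "\<And>z. E w z \<Longrightarrow> z = y" using L2[OF np d xy xy(3) xw[symmetric]] by blast
  let ?S = "{u,x,y,w}"
  have clS: "b \<in> ?S" if "a \<in> ?S" "E a b" for a b
  proof -
    have "a = u \<or> a = x \<or> a = y \<or> a = w" using that(1) by simp
    then show ?thesis
    proof (elim disjE)
      assume "a = u" then show ?thesis using Nu[of b] that(2) by simp
    next
      assume "a = x" then have "b = u \<or> b = y" using Nx[of b] that(2) by simp
      then show ?thesis by auto
    next
      assume "a = y" then have "b = x \<or> b = w" using Ny[of b] that(2) by simp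
      then show ?thesis by auto
    next
      assume "a = w" then show ?thesis using Nw[of b] that(2) by simp
    qed
  qed
  have CS: "?C = ?S"
  proof
    have "v \<in> ?S" using rt_closed[OF rt_sym[OF ru] _ clS] by simp
    then show "?C \<subseteq> ?S" unfolding component_def using rt_closed[of v _ ?S] clS by blast
    have "E\<^sup>*\<^sup>* v x" using ru xy(1) by (rule rtranclp.rtrancl_into_rtrancl)
    moreover then have "E\<^sup>*\<^sup>* v y" using xy(2) by (rule rtranclp.rtrancl_into_rtrancl)
    ultimately show "?S \<subseteq> ?C" using ru rw unfolding component_def by auto
  qed
  have ne1: "\<not> E u y" "\<not> E u w" "\<not> E x w"
    using Nu[of y] Nu[of w] Nx[of w] d by auto
  have ne: "\<not> E u y" "\<not> E u w" "\<not> E x w" "\<not> E y u" "\<not> E w u" "\<not> E w x"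
    using ne1 symE by blast+
  have ee: "E x u" "E y x" "E w y" using xy symE by blast+
  have ir: "\<not> E u u" "\<not> E x x" "\<not> E y y" "\<not> E w w" using irr by auto
  have "induced_is_path E ?S"
    unfolding induced_is_path_def
  proof (intro exI[of _ "[u,x,y,w]"] conjI)
    show "[u,x,y,w] \<noteq> []" by simp
    show "distinct [u,x,y,w]" by (fact d)
    show "set [u,x,y,w] = ?S" by simp
    show "\<forall>a\<in>?S. \<forall>b\<in>?S. E a b \<longleftrightarrow> (\<exists>i. Suc i < length [u,x,y,w] \<and>
        ((a = [u,x,y,w] ! i \<and> b = [u,x,y,w] ! Suc i) \<or> (b = [u,x,y,w] ! i \<and> a = [u,x,y,w] ! Suc i)))"
      unfolding ex3 using ne ee ir xy d by auto
  qed
  then show ?thesis using CS by simp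
qed

end


theorem theorem4p3:
  fixes V :: "'a set" and E :: "'a \<Rightarrow> 'a \<Rightarrow> bool"
  assumes "forest V E"
  shows "game_chromatic_number V E = 2 \<longleftrightarrow>
    ((1 \<le> longest_path_length V E \<and> longest_path_length V E \<le> 2) \<or>
     (longest_path_length V E = 3 \<and> odd (card V) \<and>
      (\<forall>v\<in>V. diameter E (component E v) = 3 \<longrightarrow> induced_is_path E (component E v))))"
proof -
  interpret F V E using assms by unfold_locales
  define W where "W t \<longleftrightarrow> alice_wins V E t (\<lambda>_. None) True" for t
  define DC where "DC \<longleftrightarrow> (\<forall>v\<in>V. diameter E (component E v) = 3 \<longrightarrow> induced_is_path E (component E v))"
  define Ed where "Ed \<longleftrightarrow> (\<exists>a b. E a b)"
  have Wbig: "W (Suc (card V))"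
  proof -
    have "\<And>c. \<not> blocked V E (Suc (card V)) c" using big_t_nb[OF finV inV2] by simp
    then show ?thesis unfolding W_def using never_blocked_wins[OF finV] by blast
  qed
  have gcn: "game_chromatic_number V E = 2 \<longleftrightarrow> W 2 \<and> \<not> W 0 \<and> \<not> W 1"
  proof
    assume g: "game_chromatic_number V E = 2"
    have ex: "\<exists>t. W t" using Wbig by blast
    have "W (LEAST t. W t)" using LeastI_ex[OF ex] .
    moreover have "(LEAST t. W t) = 2" using g unfolding game_chromatic_number_def W_def by simp
    ultimately have "W 2" by simp
    moreover have "\<not> W 0" "\<not> W 1" using not_less_Least[of _ W] \<open>(LEAST t. W t) = 2\<close> by auto
    ultimately show "W 2 \<and> \<not> W 0 \<and> \<not> W 1" by simp
  next
    assume h: "W 2 \<and> \<not> W 0 \<and> \<not> W 1"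
    have "(LEAST t. W t) = 2"
    proof (rule Least_equality)
      show "W 2" using h by simp
      fix y assume "W y"
      then show "2 \<le> y" using h by (cases y; cases "y - 1"; auto)
    qed
    then show "game_chromatic_number V E = 2" unfolding game_chromatic_number_def W_def by simp
  qed
  have rhs: "((1 \<le> longest_path_length V E \<and> longest_path_length V E \<le> 2) \<or>
     (longest_path_length V E = 3 \<and> odd (card V) \<and> DC)) \<longleftrightarrow>
     Ed \<and> \<not> P5 E \<and> (P4 E \<longrightarrow> odd (card V) \<and> DC)"
    using P5_iff P4_iff Edge_iff unfolding Ed_def by auto
  have DCS3: "P4 E \<Longrightarrow> \<not> P5 E \<Longrightarrow> DC \<longleftrightarrow> S3 E"
    unfolding DC_def using DC_S3 S3_DC by blast
  have noP4S3: "\<not> P4 E \<Longrightarrow> S3 E" unfolding P4_def S3_def by blast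
  have fwd: "Ed \<and> \<not> P5 E \<and> (P4 E \<longrightarrow> odd (card V) \<and> DC)" if w: "W 2 \<and> \<not> W 0 \<and> \<not> W 1"
  proof -
    have Ed
    proof (rule ccontr)
      assume "\<not> Ed"
      then have "\<And>u v. \<not> E u v" unfolding Ed_def by blast
      then have "W 1" unfolding W_def
        using never_blocked_wins[OF finV, of E 1] noedge_nb[of E V 0] by simp
      then show False using w by simp
    qed
    moreover have np: "\<not> P5 E"
    proof
      assume "P5 E"
      then obtain a b c d e where "distinct [a,b,c,d,e]" "E a b" "E b c" "E c d" "E d e"
        unfolding P5_def by blast
      then have "\<not> W 2" unfolding W_def using bob_P5 by blast
      then show False using w by simp
    qed
    moreover have "odd (card V) \<and> DC" if p4: "P4 E"
    proof -
      obtain a b c d where h: "distinct [a,b,c,d]" "E a b" "E b c" "E c d"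
        using p4 unfolding P4_def by blast
      have s3: "S3 E"
      proof (rule ccontr)
        assume "\<not> S3 E"
        then obtain a b c d where h: "distinct [a,b,c,d]" "E a b" "E b c" "E c d"
          and ex: "(\<exists>z. E b z \<and> z \<noteq> a \<and> z \<noteq> c) \<or> (\<exists>z. E c z \<and> z \<noteq> b \<and> z \<noteq> d)"
          unfolding S3_def by blast
        from ex have "\<not> W 2"
        proof
          assume "\<exists>z. E b z \<and> z \<noteq> a \<and> z \<noteq> c"
          then obtain z where "E b z" "z \<noteq> a" "z \<noteq> c" by blast
          then show "\<not> W 2" unfolding W_def using bob_nonS3[OF np h] by blast
        next
          assume "\<exists>z. E c z \<and> z \<noteq> b \<and> z \<noteq> d"
          then obtain z where z: "E c z" "z \<noteq> b" "z \<noteq> d" by blast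
          have h': "distinct [d,c,b,a]" "E d c" "E c b" "E b a" using h symE by auto
          show "\<not> W 2" unfolding W_def using bob_nonS3[OF np h' z(1) z(3) z(2)] .
        qed
        then show False using w by simp
      qed
      have "odd (card V)"
      proof (rule ccontr)
        assume "\<not> odd (card V)"
        then have "\<not> W 2" unfolding W_def using bob_even[OF np h s3] by simp
        then show False using w by simp
      qed
      then show ?thesis using DCS3[OF p4 np] s3 by simp
    qed
    ultimately show ?thesis by blast
  qed
  have bwd: "W 2 \<and> \<not> W 0 \<and> \<not> W 1" if r: "Ed \<and> \<not> P5 E \<and> (P4 E \<longrightarrow> odd (card V) \<and> DC)"
  proof -
    obtain a b where ab: "E a b" using r unfolding Ed_def by blast
    have np: "\<not> P5 E" using r by simp
    have s3: "S3 E" using noP4S3 DCS3 np r by blast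
    have par: "P4 E \<longrightarrow> odd (card V)" using r by simp
    interpret FA V E by unfold_locales (fact np, fact s3, fact par)
    have "W 2" unfolding W_def by (rule alice_init)
    moreover have "\<not> W 0" "\<not> W 1" unfolding W_def using edge_lose[OF ab] by auto
    ultimately show ?thesis by simp
  qed
  show ?thesis unfolding gcn using rhs fwd bwd unfolding DC_def by blast
qed


end
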